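(* Let $\Delta$ be a finite abstract simplicial complex of dimension $d\ge1$, with $f^\Delta_d$ its number of $d$-simplices, and let $\rho^{(k)}_\infty$ and $\rho^{(k)}_0$ be zeros of maximal and minimal modulus, respectively, of the $h$-polynomial $h^{\Delta^{(k)}}(z)$ of the $k$-fold barycentric subdivision $\Delta^{(k)}$. Then as $k\to\infty$, $$\rho^{(k)}_\infty\sim -H_{1,d}\,f^\Delta_d\,(d+1)!^k,$$ and $$|\widetilde\chi(\Delta)|=H_{1,d}\,f^\Delta_d\,\bigl|\rho^{(k)}_0\bigr|\,(d+1)!^k\,(1+o(1)),$$ i.e. $|\widetilde\chi(\Delta)|\sim H_{1,d}f^\Delta_d|\rho^{(k)}_0|(d+1)!^k$.
   Context: An abstract simplicial complex $\Delta$ on a finite set is a family of subsets closed under taking subsets (the empty set included); a $d$-simplex is a member of cardinality $d+1$, and $\dim\Delta$ is the largest such $d$. Let $f^\Delta_i$ be the number of $i$-simplices ($f^\Delta_{-1}=1$). The reduced Euler characteristic is $\widetilde\chi(\Delta)=\sum_{\sigma\in\Delta}(-1)^{\#\sigma-1}$. The $h$-polynomial of $\Delta$ (of dimension $d$) is $h^\Delta(z)=\sum_{i=-1}^{d}f^\Delta_i(z-1)^{d-i}$. The barycentric subdivision $\Delta'$ of $\Delta$ is the complex consisting of $\emptyset$ together with all sets $\{\sigma_0,\dots,\sigma_n\}$ ($n\ge0$) of nonempty simplices of $\Delta$ with $\sigma_0\subsetneq\cdots\subsetneq\sigma_n$; $\Delta^{(0)}=\Delta$, $\Delta^{(k+1)}=(\Delta^{(k)})'$.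 $f(k)\sim g(k)$ means $f(k)/g(k)\to1$. For integers $i,d\ge -1$ define $f_{-1,-1}=1$, $f_{-1,d}=0$ for $d\ge0$, $f_{i,-1}=0$ for $i\ge0$, and $f_{i,d}=(i+1)!\,S(d+1,i+1)$ for $i,d\ge0$ ($S$ = Stirling numbers of the second kind). For $d\ge0$ define $F_{d,d}=1$ and recursively for $-1\le i\le d-1$, $F_{i,d}=\frac{1}{(d+1)!-(i+1)!}\sum_{j=i+1}^{d}f_{i,j}F_{j,d}$. Let $F_d(z)=\sum_{i=-1}^dF_{i,d}z^{d-i}$ and $H_d(z)=F_d(z-1)=\sum_{i=0}^{d+1}H_{i,d}z^{d+1-i}$, defining $H_{i,d}$. *)

theory Defs
  imports Complex_Main "HOL-Library.FSet" "HOL-Library.Landau_Symbols"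
    "HOL-Combinatorics.Stirling" "HOL-Computational_Algebra.Polynomial"
begin

definition simplicial_complex :: "'a set set \<Rightarrow> bool" where
  "simplicial_complex \<Delta> \<longleftrightarrow> {} \<in> \<Delta> \<and> (\<forall>\<sigma>\<in>\<Delta>. finite \<sigma>) \<and> (\<forall>\<sigma>\<in>\<Delta>. \<forall>\<tau>. \<tau> \<subseteq> \<sigma> \<longrightarrow> \<tau> \<in> \<Delta>)"

definition cdim :: "'a set set \<Rightarrow> int" where
  "cdim \<Delta> = int (Max (card ` \<Delta>)) - 1"

text \<open>number of simplices with j elements, i.e. f_{j-1}; face_count \<Delta> 0 = f_{-1} = 1\<close>
definition face_count :: "'a set set \<Rightarrow> nat \<Rightarrow> nat" where
  "face_count \<Delta> j = card {\<sigma>\<in>\<Delta>. card \<sigma> = j}"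

definition fvec :: "'a set set \<Rightarrow> int \<Rightarrow> nat" where
  "fvec \<Delta> i = face_count \<Delta> (nat (i + 1))"

definition red_euler_char :: "'a set set \<Rightarrow> int" where
  "red_euler_char \<Delta> = (\<Sum>\<sigma>\<in>\<Delta>. - ((-1) ^ card \<sigma>))"

text \<open>h-polynomial: sum over i = -1..d of f_i (z-1)^(d-i); written with j = i+1, D = d+1\<close>
definition h_poly :: "'a set set \<Rightarrow> complex poly" where
  "h_poly \<Delta> = (let D = Max (card ` \<Delta>) in
     (\<Sum>j\<le>D. of_nat (face_count \<Delta> j) * [:-1, 1:] ^ (D - j)))"

text \<open>Vertices of iterated subdivisions: original vertices, or (nonempty finite) simplices
  of the previous complex.\<close>
datatype 'a bvtx = Atom 'a | Simp "'a bvtx fset"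

definition simp_vtx :: "'a bvtx set \<Rightarrow> 'a bvtx" where
  "simp_vtx \<sigma> = Simp (Abs_fset \<sigma>)"

definition is_chain :: "'b set set \<Rightarrow> bool" where
  "is_chain C \<longleftrightarrow> (\<forall>\<sigma>\<in>C. \<forall>\<tau>\<in>C. \<sigma> \<subseteq> \<tau> \<or> \<tau> \<subseteq> \<sigma>)"

definition bary :: "'a bvtx set set \<Rightarrow> 'a bvtx set set" where
  "bary \<Delta> = {simp_vtx ` C | C. finite C \<and> C \<subseteq> \<Delta> - {{}} \<and> is_chain C}"

definition bary_iter :: "'a set set \<Rightarrow> nat \<Rightarrow> 'a bvtx set set" where
  "bary_iter \<Delta> k = (bary ^^ k) ((\<lambda>\<sigma>. Atom ` \<sigma>) ` \<Delta>)"

definition fnum :: "int \<Rightarrow> int \<Rightarrow> real" where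
  "fnum i d = (if i = -1 \<and> d = -1 then 1
     else if i = -1 \<or> d = -1 then 0
     else fact (nat (i + 1)) * real (Stirling (nat (d + 1)) (nat (i + 1))))"

function Fnum :: "int \<Rightarrow> int \<Rightarrow> real" where
  "Fnum i d = (if d < 0 \<or> i < -1 \<or> i > d then 0
     else if i = d then 1
     else (\<Sum>j\<in>{i+1..d}. fnum i j * Fnum j d) / (fact (nat (d + 1)) - fact (nat (i + 1))))"
  by pat_completeness auto
termination
  by (relation "measure (\<lambda>(i, d). nat (d - i))") auto

definition Fpoly :: "nat \<Rightarrow> real poly" where
  "Fpoly d = (\<Sum>i\<in>{-1..int d}. monom (Fnum i (int d)) (nat (int d - i)))"

definition Hpoly :: "nat \<Rightarrow> real poly" where
  "Hpoly d = pcompose (Fpoly d) [:-1, 1:]"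

text \<open>H_d(z) = sum_{i=0}^{d+1} H_{i,d} z^{d+1-i}\<close>
definition Hnum :: "nat \<Rightarrow> nat \<Rightarrow> real" where
  "Hnum i d = coeff (Hpoly d) (d + 1 - i)"

end

theory Submission
  imports Defs "HOL-Computational_Algebra.Fundamental_Theorem_Algebra"
begin


definition aS :: "nat \<Rightarrow> nat \<Rightarrow> nat" where
  "aS n k = fact k * Stirling n k"

lemma aS_00 [simp]: "aS 0 0 = 1" by (simp add: aS_def)
lemma aS_Suc0 [simp]: "aS (Suc n) 0 = 0" by (simp add: aS_def)
lemma aS_n0: "n \<noteq> 0 \<Longrightarrow> aS n 0 = 0" by (cases n) auto
lemma aS_0Suc [simp]: "aS 0 (Suc k) = 0" by (simp add: aS_def)
lemma aS_less: "n < k \<Longrightarrow> aS n k = 0" by (simp add: aS_def)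
lemma aS_same: "aS n n = fact n" by (simp add: aS_def)
lemma aS_1: assumes "n \<ge> 1" shows "aS n 1 = 1"
proof -
  obtain m where n: "n = Suc m" using assms by (cases n) auto
  have "Stirling (Suc m) (Suc 0) = 1" by (rule Stirling_1)
  then show ?thesis unfolding n aS_def by simp
qed
lemma aS_rec: "aS (Suc n) (Suc k) = Suc k * (aS n (Suc k) + aS n k)"
  by (simp add: aS_def algebra_simps)

lemma aS_binom_sum: "(\<Sum>m<n. (n choose m) * aS m k) = aS n (Suc k)"
proof (induction n arbitrary: k)
  case 0 then show ?case by simp
next
  case (Suc n)
  have s1: "(\<Sum>m<Suc n. (Suc n choose m) * aS m k) =
        (Suc n choose 0) * aS 0 k + (\<Sum>m<n. (Suc n choose Suc m) * aS (Suc m) k)"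
    by (rule sum.lessThan_Suc_shift)
  have s2: "(\<Sum>m<n. (Suc n choose Suc m) * aS (Suc m) k) =
      (\<Sum>m<n. (n choose m) * aS (Suc m) k) + (\<Sum>m<n. (n choose Suc m) * aS (Suc m) k)"
    by (simp add: sum.distrib algebra_simps)
  have s3: "(\<Sum>m<Suc n. (n choose m) * aS m k) = (n choose 0) * aS 0 k + (\<Sum>m<n. (n choose Suc m) * aS (Suc m) k)"
    by (rule sum.lessThan_Suc_shift)
  have split: "(\<Sum>m<Suc n. (Suc n choose m) * aS m k) =
      (\<Sum>m<Suc n. (n choose m) * aS m k) + (\<Sum>m<n. (n choose m) * aS (Suc m) k)"
    using s1 s2 s3 by simp
  have A: "(\<Sum>m<Suc n. (n choose m) * aS m k) = aS n (Suc k) + aS n k"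
    using Suc.IH[of k] by simp
  show ?case
  proof (cases k)
    case 0
    have "(\<Sum>m<n. (n choose m) * aS (Suc m) k) = 0" using 0 by simp
    then show ?thesis using split A 0 aS_rec[of n 0] by simp
  next
    case (Suc k')
    have "(\<Sum>m<n. (n choose m) * aS (Suc m) k) = (\<Sum>m<n. k * ((n choose m) * aS m k + (n choose m) * aS m k'))"
      using Suc by (simp add: aS_rec algebra_simps)
    also have "\<dots> = k * (aS n (Suc k) + aS n k)"
      using Suc.IH[of k] Suc.IH[of k'] Suc by (simp add: sum.distrib sum_distrib_left[symmetric])
    finally show ?thesis using split A aS_rec[of n k] by (simp add: algebra_simps)
  qed
qed

section \<open>Chains\<close>

lemma Union_in_chain:
  assumes "finite C" "C \<noteq> {}" "is_chain C" shows "\<Union>C \<in> C"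
  using assms
proof (induction C rule: finite_ne_induct)
  case (singleton x) then show ?case by simp
next
  case (insert x F)
  have ch: "is_chain F" using insert.prems by (auto simp: is_chain_def)
  have "\<Union>F \<in> F" using insert.IH ch by simp
  then have "x \<subseteq> \<Union>F \<or> \<Union>F \<subseteq> x" using insert.prems by (auto simp: is_chain_def)
  then show ?case using \<open>\<Union>F \<in> F\<close> by (auto simp: Un_absorb1 Un_absorb2)
qed

definition chains_top :: "'b set \<Rightarrow> nat \<Rightarrow> 'b set set set" where
  "chains_top \<tau> m = {C. C \<subseteq> Pow \<tau> - {{}} \<and> is_chain C \<and> \<tau> \<in> C \<and> card C = m}"

lemma finite_chains_top: "finite \<tau> \<Longrightarrow> finite (chains_top \<tau> m)"
  by (rule finite_subset[of _ "Pow (Pow \<tau>)"]) (auto simp: chains_top_def)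

lemma chains_top_0: assumes "finite \<tau>" shows "chains_top \<tau> 0 = {}"
proof -
  have "card C > 0" if "C \<subseteq> Pow \<tau>" "\<tau> \<in> C" for C
    using that assms by (subst card_gt_0_iff) (auto intro: finite_subset[of _ "Pow \<tau>"])
  then show ?thesis by (auto simp: chains_top_def)
qed

lemma chains_top_1: "finite \<tau> \<Longrightarrow> \<tau> \<noteq> {} \<Longrightarrow> chains_top \<tau> (Suc 0) = {{\<tau>}}"
  by (auto simp: chains_top_def is_chain_def card_Suc_eq)

lemma chains_top_SS:
  assumes "finite \<tau>" "\<tau> \<noteq> {}"
  shows "chains_top \<tau> (Suc (Suc k)) = (\<Union>\<sigma>\<in>Pow \<tau> - {{}, \<tau>}. insert \<tau> ` chains_top \<sigma> (Suc k))"
proof (intro equalityI subsetI)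
  fix C assume C: "C \<in> chains_top \<tau> (Suc (Suc k))"
  then have fC: "finite C" using assms by (auto simp: chains_top_def intro: finite_subset[of _ "Pow \<tau>"])
  define C' where "C' = C - {\<tau>}"
  have cC': "card C' = Suc k" using C fC by (auto simp: chains_top_def C'_def)
  then have "C' \<noteq> {}" by auto
  have chC': "is_chain C'" using C by (auto simp: chains_top_def is_chain_def C'_def)
  have fC': "finite C'" using fC by (simp add: C'_def)
  define \<sigma> where "\<sigma> = \<Union>C'"
  have s: "\<sigma> \<in> C'" using Union_in_chain[OF fC' \<open>C' \<noteq> {}\<close> chC'] by (simp add: \<sigma>_def)
  have "\<sigma> \<in> Pow \<tau> - {{}, \<tau>}" using s C by (auto simp: C'_def chains_top_def)
  moreover have "C' \<in> chains_top \<sigma> (Suc k)"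
    using s C cC' chC' by (auto simp: chains_top_def C'_def \<sigma>_def)
  moreover have "C = insert \<tau> C'" using C by (auto simp: C'_def chains_top_def)
  ultimately show "C \<in> (\<Union>\<sigma>\<in>Pow \<tau> - {{}, \<tau>}. insert \<tau> ` chains_top \<sigma> (Suc k))" by blast
next
  fix C assume "C \<in> (\<Union>\<sigma>\<in>Pow \<tau> - {{}, \<tau>}. insert \<tau> ` chains_top \<sigma> (Suc k))"
  then obtain \<sigma> C' where s: "\<sigma> \<subseteq> \<tau>" "\<sigma> \<noteq> {}" "\<sigma> \<noteq> \<tau>" and C': "C' \<in> chains_top \<sigma> (Suc k)"
    and CC: "C = insert \<tau> C'" by auto
  have "\<tau> \<notin> C'" using C' s by (auto simp: chains_top_def)
  moreover have "finite C'" using C' s assms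
    by (auto simp: chains_top_def intro: finite_subset[of _ "Pow \<sigma>"] finite_subset[of \<sigma> \<tau>])
  ultimately have "card C = Suc (Suc k)" using C' CC by (simp add: chains_top_def)
  moreover have "is_chain C" using C' s CC by (auto simp: chains_top_def is_chain_def)
  ultimately show "C \<in> chains_top \<tau> (Suc (Suc k))"
    using C' s CC assms by (auto simp: chains_top_def)
qed

lemma sum_Pow_by_card:
  assumes "finite \<tau>"
  shows "(\<Sum>\<sigma>\<in>Pow \<tau> - {\<tau>}. g (card \<sigma>)) = (\<Sum>m<card \<tau>. (card \<tau> choose m) * g m)"
proof -
  have eq: "Pow \<tau> - {\<tau>} = (\<Union>m<card \<tau>. {\<sigma>. \<sigma> \<subseteq> \<tau> \<and> card \<sigma> = m})"
  proof (intro equalityI subsetI)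
    fix \<sigma> assume "\<sigma> \<in> Pow \<tau> - {\<tau>}"
    then have "card \<sigma> < card \<tau>" using assms by (auto intro: psubset_card_mono)
    then show "\<sigma> \<in> (\<Union>m<card \<tau>. {\<sigma>. \<sigma> \<subseteq> \<tau> \<and> card \<sigma> = m})" using \<open>\<sigma> \<in> Pow \<tau> - {\<tau>}\<close> by auto
  qed auto
  have "(\<Sum>\<sigma>\<in>Pow \<tau> - {\<tau>}. g (card \<sigma>)) = (\<Sum>m<card \<tau>. \<Sum>\<sigma>\<in>{\<sigma>. \<sigma> \<subseteq> \<tau> \<and> card \<sigma> = m}. g (card \<sigma>))"
    unfolding eq using assms
    by (intro sum.UNION_disjoint) (auto intro: finite_subset[of _ "Pow \<tau>"])
  also have "\<dots> = (\<Sum>m<card \<tau>. (card \<tau> choose m) * g m)"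
    using assms by (intro sum.cong refl) (simp add: n_subsets)
  finally show ?thesis .
qed

lemma card_chains_top:
  assumes "finite \<tau>" "\<tau> \<noteq> {}"
  shows "card (chains_top \<tau> m) = aS (card \<tau>) m"
  using assms
proof (induction "card \<tau>" arbitrary: \<tau> m rule: less_induct)
  case less
  have n1: "card \<tau> \<ge> 1" using less.prems by (simp add: Suc_leI card_gt_0_iff)
  show ?case
  proof (cases m)
    case 0 then show ?thesis using less.prems n1 by (cases "card \<tau>") (auto simp: chains_top_0)
  next
    case (Suc m')
    show ?thesis
    proof (cases m')
      case 0 then have "card (chains_top \<tau> m) = 1" using Suc less.prems by (simp add: chains_top_1)
      then show ?thesis using aS_1[OF n1] Suc \<open>m' = 0\<close> by simp
    next
      case (Suc k)
      have "card (chains_top \<tau> m) = (\<Sum>\<sigma>\<in>Pow \<tau> - {{}, \<tau>}. card (insert \<tau> ` chains_top \<sigma> (Suc k)))"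
        unfolding \<open>m = Suc m'\<close> Suc chains_top_SS[OF less.prems]
      proof (rule card_UN_disjoint)
        show "finite (Pow \<tau> - {{}, \<tau>})" using less.prems by simp
        show "\<forall>i\<in>Pow \<tau> - {{}, \<tau>}. finite (insert \<tau> ` chains_top i (Suc k))"
          using less.prems by (auto intro!: finite_chains_top dest: rev_finite_subset)
        show "\<forall>i\<in>Pow \<tau> - {{}, \<tau>}. \<forall>j\<in>Pow \<tau> - {{}, \<tau>}. i \<noteq> j \<longrightarrow>
            insert \<tau> ` chains_top i (Suc k) \<inter> insert \<tau> ` chains_top j (Suc k) = {}"
        proof (intro ballI impI)
          fix i j assume i: "i \<in> Pow \<tau> - {{}, \<tau>}" and j: "j \<in> Pow \<tau> - {{}, \<tau>}" and ij: "i \<noteq> j"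
          show "insert \<tau> ` chains_top i (Suc k) \<inter> insert \<tau> ` chains_top j (Suc k) = {}"
          proof (rule ccontr)
            assume "\<not> ?thesis"
            then obtain C1 C2 where C1: "C1 \<in> chains_top i (Suc k)" and C2: "C2 \<in> chains_top j (Suc k)"
              and e: "insert \<tau> C1 = insert \<tau> C2" by auto
            have "\<tau> \<notin> C1" "\<tau> \<notin> C2" using C1 C2 i j by (auto simp: chains_top_def)
            then have "C1 = C2" using e by (metis insert_ident)
            have "\<Union>C1 = i" using C1 by (auto simp: chains_top_def)
            moreover have "\<Union>C2 = j" using C2 by (auto simp: chains_top_def)
            ultimately show False using ij \<open>C1 = C2\<close> by simp
          qed
        qed
      qed
      also have "\<dots> = (\<Sum>\<sigma>\<in>Pow \<tau> - {{}, \<tau>}. aS (card \<sigma>) (Suc k))"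
      proof (intro sum.cong refl)
        fix \<sigma> assume s: "\<sigma> \<in> Pow \<tau> - {{}, \<tau>}"
        have "inj_on (insert \<tau>) (chains_top \<sigma> (Suc k))"
        proof (rule inj_onI)
          fix C1 C2 assume C1: "C1 \<in> chains_top \<sigma> (Suc k)" and C2: "C2 \<in> chains_top \<sigma> (Suc k)"
            and e: "insert \<tau> C1 = insert \<tau> C2"
          have "\<tau> \<notin> C1" "\<tau> \<notin> C2" using C1 C2 s by (auto simp: chains_top_def)
          then show "C1 = C2" using e by (metis insert_ident)
        qed
        then have ci: "card (insert \<tau> ` chains_top \<sigma> (Suc k)) = card (chains_top \<sigma> (Suc k))"
          by (rule card_image)
        have fs: "finite \<sigma>" using s less.prems(1) by (auto dest: rev_finite_subset)
        have "card \<sigma> < card \<tau>" using s less.prems(1) by (intro psubset_card_mono) auto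
        have "card (chains_top \<sigma> (Suc k)) = aS (card \<sigma>) (Suc k)"
          using s fs \<open>card \<sigma> < card \<tau>\<close> by (intro less.hyps) auto
        with ci show "card (insert \<tau> ` chains_top \<sigma> (Suc k)) = aS (card \<sigma>) (Suc k)" by simp
      qed
      also have "\<dots> = (\<Sum>\<sigma>\<in>Pow \<tau> - {\<tau>}. aS (card \<sigma>) (Suc k))"
      proof -
        have e: "Pow \<tau> - {\<tau>} = insert {} (Pow \<tau> - {{}, \<tau>})" using less.prems by auto
        have "(\<Sum>\<sigma>\<in>insert {} (Pow \<tau> - {{}, \<tau>}). aS (card \<sigma>) (Suc k)) =
            aS (card ({}::'a set)) (Suc k) + (\<Sum>\<sigma>\<in>Pow \<tau> - {{}, \<tau>}. aS (card \<sigma>) (Suc k))"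
          using less.prems by (intro sum.insert) auto
        then show ?thesis unfolding e by simp
      qed
      also have "\<dots> = aS (card \<tau>) (Suc (Suc k))"
        using sum_Pow_by_card[OF less.prems(1), of "\<lambda>j. aS j (Suc k)"] aS_binom_sum[of "card \<tau>" "Suc k"] by simp
      finally show ?thesis using \<open>m = Suc m'\<close> Suc by simp
    qed
  qed
qed


lemma inj_on_simp_vtx: "inj_on simp_vtx {\<sigma>. finite \<sigma>}"
  by (auto simp: inj_on_def simp_vtx_def Abs_fset_inject)

definition chainsX :: "'b set set \<Rightarrow> nat \<Rightarrow> 'b set set set" where
  "chainsX X m = {C. finite C \<and> C \<subseteq> X - {{}} \<and> is_chain C \<and> card C = m}"

lemma bary_sc:
  assumes "simplicial_complex X" "finite X"
  shows "simplicial_complex (bary X)" "finite (bary X)"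
proof -
  have fin: "\<forall>\<sigma>\<in>X. finite \<sigma>" using assms by (simp add: simplicial_complex_def)
  show "finite (bary X)"
    by (rule finite_subset[of _ "(\<lambda>C. simp_vtx ` C) ` Pow X"]) (auto simp: bary_def assms)
  have "{} \<in> bary X" unfolding bary_def by (auto simp: is_chain_def intro!: exI[of _ "{}"])
  moreover have "\<forall>\<sigma>\<in>bary X. finite \<sigma>"
    unfolding bary_def by auto
  moreover have "\<tau> \<in> bary X" if h: "\<sigma> \<in> bary X" "\<tau> \<subseteq> \<sigma>" for \<sigma> \<tau>
  proof -
    obtain C where C: "\<sigma> = simp_vtx ` C" "finite C" "C \<subseteq> X - {{}}" "is_chain C" using h(1) unfolding bary_def by blast
    define C' where "C' = {c\<in>C. simp_vtx c \<in> \<tau>}"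
    have "\<tau> = simp_vtx ` C'" using h(2) C by (auto simp: C'_def)
    moreover have "finite C'" "C' \<subseteq> X - {{}}" "is_chain C'" using C by (auto simp: C'_def is_chain_def)
    ultimately show ?thesis unfolding bary_def by blast
  qed
  ultimately show "simplicial_complex (bary X)" by (auto simp: simplicial_complex_def)
qed

lemma face_count_bary:
  fixes X :: "'a bvtx set set"
  assumes "simplicial_complex X" "finite X"
  shows "face_count (bary X) m = (\<Sum>\<sigma>\<in>X. aS (card \<sigma>) m)"
proof -
  have fin: "\<forall>\<sigma>\<in>X. finite \<sigma>" using assms by (simp add: simplicial_complex_def)
  have cardC: "card (simp_vtx ` C) = card C" if "C \<subseteq> X" for C
    using that fin by (intro card_image inj_on_subset[OF inj_on_simp_vtx]) auto
  have e1: "{\<sigma> \<in> bary X. card \<sigma> = m} = (\<lambda>C. simp_vtx ` C) ` chainsX X m"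
  proof (intro equalityI subsetI)
    fix \<sigma> assume "\<sigma> \<in> {\<sigma> \<in> bary X. card \<sigma> = m}"
    then obtain C where C: "\<sigma> = simp_vtx ` C" "finite C" "C \<subseteq> X - {{}}" "is_chain C" "card \<sigma> = m"
      unfolding bary_def by blast
    have "C \<subseteq> X" using C(3) by blast
    then have "card C = m" using cardC[of C] C(1,5) by simp
    then have "C \<in> chainsX X m" using C by (simp add: chainsX_def)
    then show "\<sigma> \<in> (\<lambda>C. simp_vtx ` C) ` chainsX X m" using C(1) by blast
  next
    fix \<sigma> assume "\<sigma> \<in> (\<lambda>C. simp_vtx ` C) ` chainsX X m"
    then obtain C where C: "\<sigma> = simp_vtx ` C" "C \<in> chainsX X m" by blast
    then have "card \<sigma> = m" using cardC[of C] unfolding chainsX_def by blast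
    moreover have "\<sigma> \<in> bary X" using C unfolding bary_def chainsX_def by blast
    ultimately show "\<sigma> \<in> {\<sigma> \<in> bary X. card \<sigma> = m}" by simp
  qed
  have inj: "inj_on (\<lambda>C. simp_vtx ` C) (chainsX X m)"
  proof (rule inj_on_image)
    show "inj_on simp_vtx (\<Union> (chainsX X m))"
      using fin by (intro inj_on_subset[OF inj_on_simp_vtx]) (auto simp: chainsX_def)
  qed
  have fc: "face_count (bary X) m = card (chainsX X m)"
    unfolding face_count_def e1 using inj by (rule card_image)
  show ?thesis
  proof (cases m)
    case 0
    have "chainsX X 0 = {{}}" by (auto simp: chainsX_def is_chain_def)
    moreover have "(\<Sum>\<sigma>\<in>X. aS (card \<sigma>) 0) = 1"
    proof -
      have e: "{} \<in> X" using assms by (simp add: simplicial_complex_def)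
      have "(\<Sum>\<sigma>\<in>X. aS (card \<sigma>) 0) = aS (card ({}::'a bvtx set)) 0 + (\<Sum>\<sigma>\<in>X-{{}}. aS (card \<sigma>) 0)"
        using assms(2) e by (rule sum.remove)
      moreover have "(\<Sum>\<sigma>\<in>X-{{}}. aS (card \<sigma>) 0) = 0"
      proof (intro sum.neutral ballI)
        fix \<sigma> assume "\<sigma> \<in> X - {{}}"
        then have "card \<sigma> \<noteq> 0" using fin by auto
        then show "aS (card \<sigma>) 0 = 0" by (rule aS_n0)
      qed
      ultimately show ?thesis by simp
    qed
    ultimately show ?thesis using fc 0 by simp
  next
    case (Suc m')
    have eq: "chainsX X m = (\<Union>\<tau>\<in>X. chains_top \<tau> m)"
    proof (intro equalityI subsetI)
      fix C assume C: "C \<in> chainsX X m"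
      then have "finite C" "C \<noteq> {}" "is_chain C" using Suc by (auto simp: chainsX_def)
      then have u: "\<Union>C \<in> C" by (rule Union_in_chain)
      then have "\<Union>C \<in> X" using C by (auto simp: chainsX_def)
      moreover have "C \<in> chains_top (\<Union>C) m" using C u by (auto simp: chainsX_def chains_top_def)
      ultimately show "C \<in> (\<Union>\<tau>\<in>X. chains_top \<tau> m)" by blast
    next
      fix C assume "C \<in> (\<Union>\<tau>\<in>X. chains_top \<tau> m)"
      then obtain \<tau> where t: "\<tau> \<in> X" "C \<in> chains_top \<tau> m" by auto
      have "finite \<tau>" using t fin by auto
      then have "finite C" using t by (auto simp: chains_top_def intro: finite_subset[of C "Pow \<tau>"])
      moreover have "C \<subseteq> X - {{}}" using t assms(1) by (auto simp: chains_top_def simplicial_complex_def)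
      ultimately show "C \<in> chainsX X m" using t by (auto simp: chains_top_def chainsX_def)
    qed
    have "card (chainsX X m) = (\<Sum>\<tau>\<in>X. card (chains_top \<tau> m))"
      unfolding eq
    proof (rule card_UN_disjoint)
      show "finite X" by fact
      show "\<forall>i\<in>X. finite (chains_top i m)" using fin by (auto intro: finite_chains_top)
      show "\<forall>i\<in>X. \<forall>j\<in>X. i \<noteq> j \<longrightarrow> chains_top i m \<inter> chains_top j m = {}"
      proof (intro ballI impI)
        fix i j assume "i \<in> X" "j \<in> X" "i \<noteq> j"
        have "\<Union>C = i" if "C \<in> chains_top i m" for C and i :: "'a bvtx set"
          using that by (auto simp: chains_top_def)
        then show "chains_top i m \<inter> chains_top j m = {}" using \<open>i \<noteq> j\<close> by blast
      qed
    qed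
    also have "\<dots> = (\<Sum>\<tau>\<in>X. aS (card \<tau>) m)"
    proof (intro sum.cong refl)
      fix \<tau> assume "\<tau> \<in> X"
      show "card (chains_top \<tau> m) = aS (card \<tau>) m"
      proof (cases "\<tau> = {}")
        case True
        have "chains_top \<tau> m = {}" using True by (auto simp: chains_top_def)
        then show ?thesis using True Suc by simp
      next
        case False then show ?thesis using fin \<open>\<tau> \<in> X\<close> card_chains_top by auto
      qed
    qed
    finally show ?thesis using fc by simp
  qed
qed


lemma sum_by_card:
  assumes "finite X" "\<forall>\<sigma>\<in>X. card \<sigma> \<le> N"
  shows "(\<Sum>\<sigma>\<in>X. g (card \<sigma>)) = (\<Sum>j\<le>N. of_nat (face_count X j) * g j)"
proof -
  have "(\<Sum>\<sigma>\<in>X. g (card \<sigma>)) = (\<Sum>\<sigma>\<in>X. \<Sum>j\<le>N. if card \<sigma> = j then g j else 0)"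
    using assms(2) by (intro sum.cong refl) (simp add: sum.delta)
  also have "\<dots> = (\<Sum>j\<le>N. \<Sum>\<sigma>\<in>X. if card \<sigma> = j then g j else 0)" by (rule sum.swap)
  also have "\<dots> = (\<Sum>j\<le>N. of_nat (face_count X j) * g j)"
  proof (intro sum.cong refl)
    fix j
    have "(\<Sum>\<sigma>\<in>X. if card \<sigma> = j then g j else 0) = (\<Sum>\<sigma>\<in>{\<sigma>\<in>X. card \<sigma> = j}. g j)"
      using assms(1) by (rule sum.inter_filter[symmetric])
    then show "(\<Sum>\<sigma>\<in>X. if card \<sigma> = j then g j else 0) = of_nat (face_count X j) * g j"
      by (simp add: face_count_def)
  qed
  finally show ?thesis .
qed

definition maxc :: "'b set set \<Rightarrow> nat \<Rightarrow> bool" where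
  "maxc X D \<longleftrightarrow> (\<forall>\<sigma>\<in>X. card \<sigma> \<le> D) \<and> (\<exists>\<sigma>\<in>X. card \<sigma> = D)"

lemma maxc_Max: "finite X \<Longrightarrow> maxc X D \<Longrightarrow> Max (card ` X) = D"
  unfolding maxc_def by (intro Max_eqI) auto

lemma face_count_zero: "finite X \<Longrightarrow> face_count X m = 0 \<Longrightarrow> \<sigma> \<in> X \<Longrightarrow> card \<sigma> \<noteq> m"
  by (auto simp: face_count_def)

lemma bary_maxc:
  fixes X :: "'a bvtx set set"
  assumes "simplicial_complex X" "finite X" "maxc X D"
  shows "maxc (bary X) D"
proof -
  have fb: "finite (bary X)" using bary_sc assms by blast
  have "card \<sigma> \<le> D" if "\<sigma> \<in> bary X" for \<sigma>
  proof (rule ccontr)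
    assume "\<not> card \<sigma> \<le> D"
    then have "face_count (bary X) (card \<sigma>) = 0"
      using assms unfolding face_count_bary[OF assms(1,2)] maxc_def
      by (intro sum.neutral) (auto intro!: aS_less)
    then show False using face_count_zero[OF fb _ that] by blast
  qed
  moreover have "\<exists>\<sigma>\<in>bary X. card \<sigma> = D"
  proof -
    obtain \<tau> where t: "\<tau> \<in> X" "card \<tau> = D" using assms(3) by (auto simp: maxc_def)
    have "aS D D \<le> (\<Sum>\<sigma>\<in>X. aS (card \<sigma>) D)"
      using t assms(2) member_le_sum[of \<tau> X "\<lambda>\<sigma>. aS (card \<sigma>) D"] by auto
    moreover have "aS D D > 0" by (simp add: aS_same)
    ultimately have "face_count (bary X) D > 0" using face_count_bary[OF assms(1,2)] by simp
    then have "{\<sigma>\<in>bary X. card \<sigma> = D} \<noteq> {}" unfolding face_count_def by (metis card.empty less_irrefl)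
    then show ?thesis by auto
  qed
  ultimately show ?thesis by (simp add: maxc_def)
qed

lemma bary_iter_Suc: "bary_iter \<Delta> (Suc k) = bary (bary_iter \<Delta> k)"
  by (simp add: bary_iter_def)

lemma bary_iter_0_props:
  assumes "simplicial_complex \<Delta>" "finite \<Delta>"
  shows "simplicial_complex (bary_iter \<Delta> 0)" "finite (bary_iter \<Delta> 0)"
    "face_count (bary_iter \<Delta> 0) j = face_count \<Delta> j"
proof -
  have X: "bary_iter \<Delta> 0 = (\<lambda>\<sigma>. Atom ` \<sigma>) ` \<Delta>" by (simp add: bary_iter_def)
  have injA: "inj_on (\<lambda>\<sigma>. Atom ` \<sigma>) A" for A :: "'a set set"
    by (rule inj_on_image) (auto simp: inj_on_def)
  have cA: "card (Atom ` \<sigma>) = card \<sigma>" for \<sigma> :: "'a set"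
    by (rule card_image) (auto simp: inj_on_def)
  show "finite (bary_iter \<Delta> 0)" using assms X by simp
  show "simplicial_complex (bary_iter \<Delta> 0)"
    unfolding X simplicial_complex_def
  proof (intro conjI ballI allI impI)
    show "{} \<in> (\<lambda>\<sigma>. Atom ` \<sigma>) ` \<Delta>" using assms(1) by (force simp: simplicial_complex_def)
  next
    fix \<sigma> assume "\<sigma> \<in> (\<lambda>\<sigma>. Atom ` \<sigma>) ` \<Delta>" then show "finite \<sigma>"
      using assms(1) by (auto simp: simplicial_complex_def)
  next
    fix \<sigma> \<tau> assume s: "\<sigma> \<in> (\<lambda>\<sigma>. Atom ` \<sigma>) ` \<Delta>" and t: "\<tau> \<subseteq> \<sigma>"
    then obtain s0 where "s0 \<in> \<Delta>" "\<sigma> = Atom ` s0" by auto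
    moreover define t0 where "t0 = {x\<in>s0. Atom x \<in> \<tau>}"
    ultimately have "t0 \<in> \<Delta>" "\<tau> = Atom ` t0" using assms(1) t by (auto simp: simplicial_complex_def)
    then show "\<tau> \<in> (\<lambda>\<sigma>. Atom ` \<sigma>) ` \<Delta>" by auto
  qed
  have "{\<sigma> \<in> bary_iter \<Delta> 0. card \<sigma> = j} = (\<lambda>\<sigma>. Atom ` \<sigma>) ` {\<sigma>\<in>\<Delta>. card \<sigma> = j}"
    unfolding X using cA by auto
  then show "face_count (bary_iter \<Delta> 0) j = face_count \<Delta> j"
    unfolding face_count_def by (simp add: card_image[OF injA])
qed

lemma bary_iter_props:
  assumes "simplicial_complex \<Delta>" "finite \<Delta>" "maxc \<Delta> D"
  shows "simplicial_complex (bary_iter \<Delta> k) \<and> finite (bary_iter \<Delta> k) \<and> maxc (bary_iter \<Delta> k) D"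
proof (induction k)
  case 0
  have "maxc (bary_iter \<Delta> 0) D"
  proof -
    have "\<forall>\<sigma>\<in>bary_iter \<Delta> 0. card \<sigma> \<le> D"
    proof
      fix \<sigma> assume s: "\<sigma> \<in> bary_iter \<Delta> 0"
      show "card \<sigma> \<le> D"
      proof (rule ccontr)
        assume "\<not> card \<sigma> \<le> D"
        then have "{\<tau>\<in>\<Delta>. card \<tau> = card \<sigma>} = {}"
          using assms(3) unfolding maxc_def by force
        then have "face_count \<Delta> (card \<sigma>) = 0"
          unfolding face_count_def by (metis card.empty)
        then show False using bary_iter_0_props(3)[OF assms(1,2), of "card \<sigma>"]
          face_count_zero[OF bary_iter_0_props(2)[OF assms(1,2)] _ s, of "card \<sigma>"] by simp
      qed
    qed
    moreover have "\<exists>\<sigma>\<in>bary_iter \<Delta> 0. card \<sigma> = D"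
    proof -
      obtain \<tau> where "\<tau> \<in> \<Delta>" "card \<tau> = D" using assms(3) by (auto simp: maxc_def)
      then have "face_count \<Delta> D > 0" using assms(2) by (auto simp: face_count_def card_gt_0_iff)
      then have "face_count (bary_iter \<Delta> 0) D > 0" using bary_iter_0_props(3)[OF assms(1,2)] by simp
      then show ?thesis unfolding face_count_def by (metis (mono_tags, lifting) card.empty empty_Collect_eq less_irrefl)
    qed
    ultimately show ?thesis by (simp add: maxc_def)
  qed
  then show ?case using bary_iter_0_props[OF assms(1,2)] by simp
next
  case (Suc k)
  then show ?case unfolding bary_iter_Suc using bary_sc bary_maxc by blast
qed

lemma fc_iter_Suc:
  assumes "simplicial_complex \<Delta>" "finite \<Delta>" "maxc \<Delta> D"
  shows "face_count (bary_iter \<Delta> (Suc k)) m = (\<Sum>j\<le>D. face_count (bary_iter \<Delta> k) j * aS j m)"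
proof -
  have P: "simplicial_complex (bary_iter \<Delta> k)" "finite (bary_iter \<Delta> k)" "maxc (bary_iter \<Delta> k) D"
    using bary_iter_props[OF assms] by auto
  show ?thesis unfolding bary_iter_Suc face_count_bary[OF P(1,2)]
    using sum_by_card[OF P(2), of D "\<lambda>j. aS j m"] P(3) by (simp add: maxc_def)
qed

lemma fc_iter_gt:
  assumes "simplicial_complex \<Delta>" "finite \<Delta>" "maxc \<Delta> D" "m > D"
  shows "face_count (bary_iter \<Delta> k) m = 0"
proof -
  have P: "finite (bary_iter \<Delta> k)" "maxc (bary_iter \<Delta> k) D"
    using bary_iter_props[OF assms(1-3)] by auto
  then show ?thesis using assms(4) unfolding face_count_def maxc_def by force
qed

lemma fc_iter_0:
  assumes "simplicial_complex \<Delta>" "finite \<Delta>" "maxc \<Delta> D"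
  shows "face_count (bary_iter \<Delta> k) 0 = 1"
proof -
  have P: "simplicial_complex (bary_iter \<Delta> k)" "finite (bary_iter \<Delta> k)"
    using bary_iter_props[OF assms] by auto
  then have "{\<sigma> \<in> bary_iter \<Delta> k. card \<sigma> = 0} = {{}}"
    by (auto simp: simplicial_complex_def)
  then show ?thesis by (simp add: face_count_def)
qed

section \<open>Euler characteristic\<close>

lemma aS_alt_sum: "j \<le> N \<Longrightarrow> (\<Sum>m\<le>N. (-1::int)^m * int (aS j m)) = (-1)^j"
proof (induction j arbitrary: N)
  case 0
  have "(\<Sum>m\<le>N. (-1::int)^m * int (aS 0 m)) = (\<Sum>m\<le>N. if m = 0 then 1 else 0)"
    by (intro sum.cong refl) (auto simp: aS_less)
  then show ?case by simp
next
  case (Suc j)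
  then obtain N' where N: "N = Suc N'" by (cases N) auto
  have jN: "j \<le> N'" using Suc.prems N by simp
  have "(\<Sum>m\<le>N. (-1::int)^m * int (aS (Suc j) m)) = (\<Sum>m\<le>N'. (-1::int)^(Suc m) * int (aS (Suc j) (Suc m)))"
    unfolding N by (subst sum.atMost_Suc_shift) simp
  also have "\<dots> = - (\<Sum>m\<le>N'. (-1::int)^m * (int (Suc m) * int (aS j (Suc m))))
      - (\<Sum>m\<le>N'. (-1::int)^m * (int (Suc m) * int (aS j m)))"
    by (simp add: aS_rec sum.distrib[symmetric] sum_negf[symmetric] algebra_simps)
  also have "(\<Sum>m\<le>N'. (-1::int)^m * (int (Suc m) * int (aS j (Suc m)))) = - (\<Sum>m\<le>N'. (-1::int)^m * (int m * int (aS j m)))"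
  proof -
    have "(\<Sum>m\<le>Suc N'. (-1::int)^m * (int m * int (aS j m))) = - (\<Sum>m\<le>N'. (-1::int)^m * (int (Suc m) * int (aS j (Suc m))))"
      by (subst sum.atMost_Suc_shift) (simp add: sum_negf[symmetric])
    moreover have "(\<Sum>m\<le>Suc N'. (-1::int)^m * (int m * int (aS j m))) = (\<Sum>m\<le>N'. (-1::int)^m * (int m * int (aS j m)))"
      using jN by (simp add: aS_less)
    ultimately show ?thesis by simp
  qed
  finally have fin: "(\<Sum>m\<le>N. (-1::int)^m * int (aS (Suc j) m)) = (\<Sum>m\<le>N'. (-1::int)^m * (int m * int (aS j m)))
      - (\<Sum>m\<le>N'. (-1::int)^m * (int (Suc m) * int (aS j m)))" by simp
  have "(\<Sum>m\<le>N'. (-1::int)^m * (int (Suc m) * int (aS j m))) =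
      (\<Sum>m\<le>N'. (-1::int)^m * int (aS j m)) + (\<Sum>m\<le>N'. (-1::int)^m * (int m * int (aS j m)))"
    by (simp add: sum.distrib[symmetric] algebra_simps)
  with fin have "(\<Sum>m\<le>N. (-1::int)^m * int (aS (Suc j) m)) = - (\<Sum>m\<le>N'. (-1::int)^m * int (aS j m))"
    by simp
  then show ?case using Suc.IH[OF jN] by simp
qed

lemma euler_iter:
  assumes "simplicial_complex \<Delta>" "finite \<Delta>" "maxc \<Delta> D"
  shows "(\<Sum>m\<le>D. (-1::int)^m * int (face_count (bary_iter \<Delta> k) m)) = (\<Sum>m\<le>D. (-1::int)^m * int (face_count \<Delta> m))"
proof (induction k)
  case 0 then show ?case using bary_iter_0_props[OF assms(1,2)] by simp
next
  case (Suc k)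
  have "(\<Sum>m\<le>D. (-1::int)^m * int (face_count (bary_iter \<Delta> (Suc k)) m)) =
      (\<Sum>m\<le>D. \<Sum>j\<le>D. int (face_count (bary_iter \<Delta> k) j) * ((-1::int)^m * int (aS j m)))"
    unfolding fc_iter_Suc[OF assms] by (simp add: sum_distrib_left algebra_simps)
  also have "\<dots> = (\<Sum>j\<le>D. int (face_count (bary_iter \<Delta> k) j) * (\<Sum>m\<le>D. (-1::int)^m * int (aS j m)))"
    by (subst sum.swap) (simp add: sum_distrib_left)
  also have "\<dots> = (\<Sum>j\<le>D. (-1::int)^j * int (face_count (bary_iter \<Delta> k) j))"
    by (intro sum.cong refl) (simp add: aS_alt_sum)
  finally show ?case using Suc.IH by simp
qed

lemma red_euler_fc:
  assumes "simplicial_complex \<Delta>" "finite \<Delta>" "maxc \<Delta> D"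
  shows "red_euler_char \<Delta> = - (\<Sum>m\<le>D. (-1::int)^m * int (face_count \<Delta> m))"
proof -
  have "red_euler_char \<Delta> = (\<Sum>\<sigma>\<in>\<Delta>. (\<lambda>j. - ((-1::int)^j)) (card \<sigma>))"
    by (simp add: red_euler_char_def)
  also have "\<dots> = (\<Sum>j\<le>D. of_nat (face_count \<Delta> j) * - ((-1::int)^j))"
    using assms by (intro sum_by_card) (auto simp: maxc_def)
  finally show ?thesis by (simp add: sum_negf algebra_simps)
qed


lemma sum_split3:
  fixes f :: "nat \<Rightarrow> 'b::comm_monoid_add"
  assumes "m \<le> N" shows "(\<Sum>j\<le>N. f j) = (\<Sum>j<m. f j) + f m + (\<Sum>j\<in>{m<..N}. f j)"
proof -
  have e1: "{..N} = {..<m} \<union> {m..N}" using assms by auto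
  have e2: "{m..N} = insert m {m<..N}" using assms by auto
  have "(\<Sum>j\<le>N. f j) = (\<Sum>j<m. f j) + (\<Sum>j\<in>{m..N}. f j)"
    unfolding e1 by (rule sum.union_disjoint) auto
  also have "(\<Sum>j\<in>{m..N}. f j) = f m + (\<Sum>j\<in>{m<..N}. f j)"
    unfolding e2 by (rule sum.insert) auto
  finally show ?thesis by (simp add: add.assoc)
qed

declare Fnum.simps[simp del]

definition Fv :: "nat \<Rightarrow> nat \<Rightarrow> real" where
  "Fv d m = Fnum (int m - 1) (int d)"

lemma fact_lt_top:
  assumes "d \<ge> 1" "m < Suc d" shows "(fact m :: real) < fact (Suc d)"
proof (cases "m = 0")
  case True
  have "(fact 1 :: real) < fact (Suc d)" using assms by (intro fact_less_mono) auto
  then show ?thesis using True by simp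
next
  case False then show ?thesis using assms by (intro fact_less_mono) auto
qed

lemma Fv_top: "Fv d (Suc d) = 1"
  unfolding Fv_def by (subst Fnum.simps) simp

lemma fnum_aS: assumes "j \<ge> 1" shows "fnum (int m - 1) (int j - 1) = real (aS j m)"
proof (cases m)
  case 0
  then show ?thesis using assms by (cases j) (auto simp: fnum_def aS_def)
next
  case (Suc n)
  have a: "nat (int n + 1) = Suc n" by simp
  have b: "nat (int j - 1 + 1) = j" using assms by simp
  have "fnum (int m - 1) (int j - 1) = fact (nat (int n + 1)) * real (Stirling (nat (int j - 1 + 1)) (nat (int n + 1)))"
    unfolding fnum_def using Suc assms by simp
  then show ?thesis unfolding a b by (simp add: aS_def Suc algebra_simps)
qed

lemma Fv_rec:
  assumes "d \<ge> 1" "m < Suc d"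
  shows "Fv d m * (fact (Suc d) - fact m) = (\<Sum>j\<in>{m<..Suc d}. real (aS j m) * Fv d j)"
proof -
  have den: "(fact (Suc d) :: real) - fact m \<noteq> 0" using fact_lt_top[OF assms] by simp
  have "Fv d m = (\<Sum>j\<in>{int m - 1 + 1..int d}. fnum (int m - 1) j * Fnum j (int d)) /
      (fact (nat (int d + 1)) - fact (nat (int m - 1 + 1)))"
    unfolding Fv_def using assms by (subst Fnum.simps) simp
  also have "nat (int d + 1) = Suc d" by simp
  also have "nat (int m - 1 + 1) = m" by simp
  also have "(\<Sum>j\<in>{int m - 1 + 1..int d}. fnum (int m - 1) j * Fnum j (int d)) =
      (\<Sum>j\<in>{m<..Suc d}. real (aS j m) * Fv d j)"
  proof (rule sum.reindex_bij_witness[of _ "\<lambda>j. int j - 1" "\<lambda>j. nat (j + 1)"])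
    fix a assume "a \<in> {int m - 1 + 1..int d}"
    then show "int (nat (a + 1)) - 1 = a" "nat (a + 1) \<in> {m<..Suc d}" by auto
  next
    fix b assume "b \<in> {m<..Suc d}"
    then show "nat (int b - 1 + 1) = b" "int b - 1 \<in> {int m - 1 + 1..int d}" by auto
  next
    fix a assume a: "a \<in> {int m - 1 + 1..int d}"
    then have "nat (a + 1) \<ge> 1" "int (nat (a + 1)) - 1 = a" by auto
    then show "real (aS (nat (a + 1)) m) * Fv d (nat (a + 1)) = fnum (int m - 1) a * Fnum a (int d)"
      using fnum_aS[of "nat (a + 1)" m] by (simp add: Fv_def)
  qed
  finally have F: "Fv d m = (\<Sum>j\<in>{m<..Suc d}. real (aS j m) * Fv d j) / (fact (Suc d) - fact m)" .
  show ?thesis unfolding F using den by (metis nonzero_mult_div_cancel_right times_divide_eq_left)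
qed

lemma Fv_0: assumes "d \<ge> 1" shows "Fv d 0 = 0"
proof -
  have z: "(\<Sum>j\<in>{0<..Suc d}. real (aS j 0) * Fv d j) = 0"
    by (intro sum.neutral ballI) (simp add: aS_n0)
  have "Fv d 0 * (fact (Suc d) - fact 0) = 0"
    using Fv_rec[OF assms, of 0] z by simp
  moreover have "(fact (Suc d) :: real) - fact 0 \<noteq> 0" using fact_lt_top[OF assms, of 0] by simp
  ultimately show ?thesis by simp
qed

lemma Fv_eigen:
  assumes "d \<ge> 1" "m \<le> Suc d"
  shows "fact (Suc d) * Fv d m = (\<Sum>j\<le>Suc d. real (aS j m) * Fv d j)"
proof -
  have "(\<Sum>j\<le>Suc d. real (aS j m) * Fv d j) =
      (\<Sum>j<m. real (aS j m) * Fv d j) + real (aS m m) * Fv d m + (\<Sum>j\<in>{m<..Suc d}. real (aS j m) * Fv d j)"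
    using assms(2) by (rule sum_split3)
  also have "(\<Sum>j<m. real (aS j m) * Fv d j) = 0" by (auto simp: aS_less)
  finally have e: "(\<Sum>j\<le>Suc d. real (aS j m) * Fv d j) = fact m * Fv d m + (\<Sum>j\<in>{m<..Suc d}. real (aS j m) * Fv d j)"
    by (simp add: aS_same)
  show ?thesis
  proof (cases "m = Suc d")
    case True then show ?thesis using e by (simp add: Fv_top)
  next
    case False
    then have "m < Suc d" using assms by simp
    then show ?thesis using e Fv_rec[OF assms(1) \<open>m < Suc d\<close>] by (simp add: algebra_simps)
  qed
qed

lemma eigen_unique:
  assumes "d \<ge> 1" "\<forall>m\<le>Suc d. fact (Suc d) * G m = (\<Sum>j\<le>Suc d. real (aS j m) * G j)"
  shows "m \<le> Suc d \<Longrightarrow> G m = G (Suc d) * Fv d m"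
proof (induction "Suc d - m" arbitrary: m rule: less_induct)
  case less
  show ?case
  proof (cases "m = Suc d")
    case True then show ?thesis by (simp add: Fv_top)
  next
    case False
    then have m: "m < Suc d" using less.prems by simp
    have IH: "G j = G (Suc d) * Fv d j" if "j \<in> {m<..Suc d}" for j
      using that by (intro less.hyps) auto
    have e0: "fact (Suc d) * G m = (\<Sum>j\<le>Suc d. real (aS j m) * G j)"
      using assms(2) m by simp
    have "(\<Sum>j\<le>Suc d. real (aS j m) * G j) =
        (\<Sum>j<m. real (aS j m) * G j) + real (aS m m) * G m + (\<Sum>j\<in>{m<..Suc d}. real (aS j m) * G j)"
      using m by (intro sum_split3) simp
    also have "(\<Sum>j<m. real (aS j m) * G j) = 0" by (intro sum.neutral ballI) (simp add: aS_less)
    also have "(\<Sum>j\<in>{m<..Suc d}. real (aS j m) * G j) = (\<Sum>j\<in>{m<..Suc d}. real (aS j m) * (G (Suc d) * Fv d j))"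
      by (rule sum.cong[OF refl]) (subst IH, assumption, rule refl)
    also have "\<dots> = G (Suc d) * (\<Sum>j\<in>{m<..Suc d}. real (aS j m) * Fv d j)"
      by (simp add: sum_distrib_left algebra_simps)
    also have "(\<Sum>j\<in>{m<..Suc d}. real (aS j m) * Fv d j) = Fv d m * (fact (Suc d) - fact m)"
      using Fv_rec[OF assms(1) m] by simp
    finally have "fact (Suc d) * G m = fact m * G m + G (Suc d) * (Fv d m * (fact (Suc d) - fact m))"
      using e0 by (simp add: aS_same)
    then have "(fact (Suc d) - fact m) * G m = (fact (Suc d) - fact m) * (G (Suc d) * Fv d m)"
      by (simp add: algebra_simps)
    moreover have "(fact (Suc d) :: real) - fact m \<noteq> 0" using fact_lt_top[OF assms(1) m] by simp
    ultimately show ?thesis by simp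
  qed
qed

lemma Fv_nonneg: assumes "d \<ge> 1" shows "m \<le> Suc d \<Longrightarrow> Fv d m \<ge> 0"
proof (induction "Suc d - m" arbitrary: m rule: less_induct)
  case less
  show ?case
  proof (cases "m = Suc d")
    case True then show ?thesis by (simp add: Fv_top)
  next
    case False
    then have m: "m < Suc d" using less.prems by simp
    have IH: "Fv d j \<ge> 0" if "j \<in> {m<..Suc d}" for j
      using that by (intro less.hyps) auto
    have "(\<Sum>j\<in>{m<..Suc d}. real (aS j m) * Fv d j) \<ge> 0"
      using IH by (intro sum_nonneg mult_nonneg_nonneg) auto
    then have "Fv d m * (fact (Suc d) - fact m) \<ge> 0" using Fv_rec[OF assms m] by simp
    moreover have "(fact (Suc d) :: real) - fact m > 0" using fact_lt_top[OF assms m] by simp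
    ultimately show ?thesis by (simp add: zero_le_mult_iff)
  qed
qed

lemma Fv_1_pos: assumes "d \<ge> 1" shows "Fv d 1 > 0"
proof -
  have m: "1 < Suc d" using assms by simp
  have "real (aS (Suc d) 1) * Fv d (Suc d) \<le> (\<Sum>j\<in>{1<..Suc d}. real (aS j 1) * Fv d j)"
    using assms Fv_nonneg[OF assms]
    by (intro member_le_sum) auto
  moreover have "real (aS (Suc d) 1) * Fv d (Suc d) = 1" using aS_1[of "Suc d"] by (simp add: Fv_top)
  ultimately have "Fv d 1 * (fact (Suc d) - fact 1) \<ge> 1" using Fv_rec[OF assms m] by simp
  moreover have "(fact (Suc d) :: real) - fact 1 > 0" using fact_lt_top[OF assms m] by simp
  ultimately show ?thesis
  proof -
    assume h1: "1 \<le> Fv d 1 * (fact (Suc d) - fact 1)" and h2: "(fact (Suc d) :: real) - fact 1 > 0"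
    show ?thesis
    proof (rule ccontr)
      assume "\<not> 0 < Fv d 1"
      then have "Fv d 1 * (fact (Suc d) - fact 1) \<le> 0" using h2 by (intro mult_nonpos_nonneg) auto
      then show False using h1 by simp
    qed
  qed
qed


definition UU :: "nat \<Rightarrow> nat \<Rightarrow> nat \<Rightarrow> real" where
  "UU N j u = (\<Sum>i\<le>N. real (j choose i) * real (aS i u))"
definition VV :: "nat \<Rightarrow> nat \<Rightarrow> nat \<Rightarrow> real" where
  "VV N j u = (\<Sum>m\<le>N. (-1)^m * real (m choose u) * real (aS j m))"

lemma binom_id: "real (Suc m) * real (Suc m choose u) = real (m + u + 1) * real (m choose u) + real u * real (m choose (u - 1))"
proof (cases u)
  case 0 then show ?thesis by simp
next
  case (Suc u')
  have "Suc m * (m choose u') = (Suc m choose Suc u') * Suc u'" by (rule Suc_times_binomial_eq)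
  then have "real (Suc m) * real (m choose u') = real (Suc m choose Suc u') * real (Suc u')"
    by (metis of_nat_mult)
  then show ?thesis using Suc by (simp add: algebra_simps)
qed

lemma UU_Suc:
  assumes "j < N"
  shows "UU N (Suc j) u = real (u + 1) * UU N j u + real u * UU N j (u - 1)"
proof -
  obtain N' where N: "N = Suc N'" using assms by (cases N) auto
  have jN: "j \<le> N'" using assms N by simp
  have ext: "(\<Sum>i\<le>N'. real (j choose i) * real (aS i v)) = UU N j v" for v
    unfolding UU_def N using jN by simp
  have "UU N (Suc j) u = real (aS 0 u) + (\<Sum>i\<le>N'. real (Suc j choose Suc i) * real (aS (Suc i) u))"
    unfolding UU_def N by (subst sum.atMost_Suc_shift) simp
  also have "\<dots> = real (aS 0 u) + (\<Sum>i\<le>N'. real (j choose Suc i) * real (aS (Suc i) u))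
      + (\<Sum>i\<le>N'. real (j choose i) * real (aS (Suc i) u))"
    by (simp add: sum.distrib algebra_simps)
  also have "real (aS 0 u) + (\<Sum>i\<le>N'. real (j choose Suc i) * real (aS (Suc i) u)) = UU N j u"
    unfolding UU_def N by (subst sum.atMost_Suc_shift) simp
  also have "(\<Sum>i\<le>N'. real (j choose i) * real (aS (Suc i) u)) = real u * UU N j u + real u * UU N j (u - 1)"
  proof (cases u)
    case 0 then show ?thesis by simp
  next
    case (Suc u')
    have "(\<Sum>i\<le>N'. real (j choose i) * real (aS (Suc i) u)) =
        real u * (\<Sum>i\<le>N'. real (j choose i) * real (aS i u)) + real u * (\<Sum>i\<le>N'. real (j choose i) * real (aS i u'))"
      unfolding Suc aS_rec by (simp add: sum_distrib_left sum.distrib algebra_simps)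
    then show ?thesis unfolding ext using Suc by simp
  qed
  finally show ?thesis by (simp add: algebra_simps)
qed

lemma VV_Suc:
  assumes "j < N"
  shows "VV N (Suc j) u = - real (u + 1) * VV N j u - real u * VV N j (u - 1)"
proof -
  obtain N' where N: "N = Suc N'" using assms by (cases N) auto
  have jN: "j \<le> N'" using assms N by simp
  define P1 where "P1 = (\<Sum>m\<le>N'. (-1)^m * (real (Suc m) * real (Suc m choose u)) * real (aS j (Suc m)))"
  define P2 where "P2 = (\<Sum>m\<le>N'. (-1)^m * (real (Suc m) * real (Suc m choose u)) * real (aS j m))"
  define Q where "Q = (\<Sum>m\<le>N. (-1)^m * (real m * real (m choose u)) * real (aS j m))"
  have "VV N (Suc j) u = (\<Sum>m\<le>N'. (-1)^(Suc m) * real (Suc m choose u) * real (aS (Suc j) (Suc m)))"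
    unfolding VV_def N by (subst sum.atMost_Suc_shift) simp
  also have "\<dots> = - (P1 + P2)"
    unfolding P1_def P2_def aS_rec by (simp add: sum.distrib[symmetric] sum_negf[symmetric] algebra_simps)
  finally have v1: "VV N (Suc j) u = - (P1 + P2)" .
  have q1: "Q = - P1"
    unfolding Q_def P1_def N by (subst sum.atMost_Suc_shift) (simp add: sum_negf[symmetric])
  have p2: "P2 = (\<Sum>m\<le>N. (-1)^m * (real (Suc m) * real (Suc m choose u)) * real (aS j m))"
    unfolding P2_def N using jN by (simp add: aS_less)
  have "VV N (Suc j) u = Q - P2" using v1 q1 by simp
  also have "\<dots> = (\<Sum>m\<le>N. (-1)^m * (real m * real (m choose u) - real (Suc m) * real (Suc m choose u)) * real (aS j m))"
    unfolding Q_def p2 by (simp add: sum_subtractf[symmetric] algebra_simps)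
  also have "\<dots> = (\<Sum>m\<le>N. (-1)^m * (- real (u + 1) * real (m choose u) - real u * real (m choose (u - 1))) * real (aS j m))"
  proof (intro sum.cong refl)
    fix m
    show "(-1)^m * (real m * real (m choose u) - real (Suc m) * real (Suc m choose u)) * real (aS j m) =
        (-1)^m * (- real (u + 1) * real (m choose u) - real u * real (m choose (u - 1))) * real (aS j m)"
      by (subst binom_id) (simp add: algebra_simps)
  qed
  also have "\<dots> = - real (u + 1) * VV N j u - real u * VV N j (u - 1)"
    unfolding VV_def by (simp add: sum_subtractf[symmetric] sum_distrib_left algebra_simps)
  finally show ?thesis .
qed

lemma UV: "j \<le> N \<Longrightarrow> (-1)^j * UU N j u = VV N j u"
proof (induction j arbitrary: u)
  case 0
  have "UU N 0 u = real (aS 0 u)" unfolding UU_def by (simp add: sum.atMost_shift)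
  moreover have "VV N 0 u = (\<Sum>m\<le>N. if m = 0 then real (0 choose u) else 0)"
    unfolding VV_def by (intro sum.cong refl) (auto simp: aS_less)
  ultimately show ?case by (cases u) simp_all
next
  case (Suc j)
  then have jN: "j < N" by simp
  have "(-1)^Suc j * UU N (Suc j) u = - (real (u + 1) * ((-1)^j * UU N j u) + real u * ((-1)^j * UU N j (u - 1)))"
    unfolding UU_Suc[OF jN] by (simp add: algebra_simps)
  also have "\<dots> = VV N (Suc j) u"
    unfolding VV_Suc[OF jN] using Suc.IH jN by (simp add: algebra_simps)
  finally show ?case .
qed

definition GG :: "nat \<Rightarrow> nat \<Rightarrow> real" where
  "GG d u = (\<Sum>j\<le>Suc d. (-1)^j * real (j choose u) * Fv d j)"

lemma GG_eigen:
  assumes "d \<ge> 1" "m \<le> Suc d"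
  shows "fact (Suc d) * GG d m = (\<Sum>u\<le>Suc d. real (aS u m) * GG d u)"
proof -
  have "(\<Sum>u\<le>Suc d. real (aS u m) * GG d u) = (\<Sum>u\<le>Suc d. \<Sum>j\<le>Suc d. (-1)^j * Fv d j * (real (j choose u) * real (aS u m)))"
    unfolding GG_def by (simp add: sum_distrib_left algebra_simps)
  also have "\<dots> = (\<Sum>j\<le>Suc d. (-1)^j * Fv d j * UU (Suc d) j m)"
    unfolding UU_def sum_distrib_left by (rule sum.swap)
  also have "\<dots> = (\<Sum>j\<le>Suc d. Fv d j * VV (Suc d) j m)"
  proof (intro sum.cong refl)
    fix j assume "j \<in> {..Suc d}"
    then have "(-1)^j * UU (Suc d) j m = VV (Suc d) j m" by (intro UV) simp
    then show "(-1)^j * Fv d j * UU (Suc d) j m = Fv d j * VV (Suc d) j m" by (simp add: algebra_simps)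
  qed
  also have "\<dots> = (\<Sum>m'\<le>Suc d. (-1)^m' * real (m' choose m) * (\<Sum>j\<le>Suc d. real (aS j m') * Fv d j))"
    unfolding VV_def sum_distrib_left by (subst sum.swap, intro sum.cong refl, simp add: algebra_simps)
  also have "\<dots> = (\<Sum>m'\<le>Suc d. (-1)^m' * real (m' choose m) * (fact (Suc d) * Fv d m'))"
    using Fv_eigen[OF assms(1)] by (intro sum.cong refl) simp
  also have "\<dots> = fact (Suc d) * GG d m"
    unfolding GG_def by (simp add: sum_distrib_left algebra_simps)
  finally show ?thesis by simp
qed

lemma GG_top: "GG d (Suc d) = (-1)^(Suc d)"
proof -
  have "GG d (Suc d) = (\<Sum>j\<le>Suc d. if j = Suc d then (-1)^j * Fv d j else 0)"
    unfolding GG_def by (intro sum.cong refl) auto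
  then show ?thesis by (simp add: Fv_top)
qed

lemma GG_Fv: assumes "d \<ge> 1" "m \<le> Suc d" shows "GG d m = (-1)^(Suc d) * Fv d m"
  using eigen_unique[OF assms(1), of "GG d" m] GG_eigen[OF assms(1)] assms(2) GG_top by simp

lemma alt_sum_Fv: assumes "d \<ge> 1" shows "(\<Sum>j\<le>Suc d. (-1)^j * Fv d j) = 0"
  using GG_Fv[OF assms, of 0] Fv_0[OF assms] by (simp add: GG_def)

lemma alt_sum_j_Fv: assumes "d \<ge> 1" shows "(\<Sum>j\<le>Suc d. (-1)^j * real j * Fv d j) = (-1)^(Suc d) * Fv d 1"
  using GG_Fv[OF assms, of 1] by (simp add: GG_def)


lemma coeff_lin_pow:
  "coeff ([:-1, 1:] ^ n :: 'b::comm_ring_1 poly) t = (if t \<le> n then of_nat (n choose t) * (-1)^(n - t) else 0)"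
proof (cases "t \<le> n")
  case True then show ?thesis by (simp add: coeff_linear_poly_power)
next
  case False
  have "degree ([:-1, 1:] ^ n :: 'b poly) \<le> n"
    by (rule order.trans[OF degree_power_le]) simp
  then show ?thesis using False by (simp add: coeff_eq_0)
qed

lemma pcompose_x_pow: "pcompose ([:0, 1:] ^ n) q = q ^ n"
proof (induction n)
  case 0 then show ?case by (metis one_pCons pcompose_const power_0)
next
  case (Suc n) then show ?case by (simp add: pcompose_mult pcompose_pCons)
qed

lemma pcompose_monom: "pcompose (monom c n) q = smult c (q ^ n)"
  by (simp add: monom_altdef pcompose_smult pcompose_x_pow)

lemma Hpoly_eq: "Hpoly d = (\<Sum>j\<le>Suc d. smult (Fv d j) ([:-1, 1:] ^ (Suc d - j)))"
proof -
  have eq: "Fpoly d = (\<Sum>j\<le>Suc d. monom (Fv d j) (Suc d - j))"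
    unfolding Fpoly_def
  proof (rule sum.reindex_bij_witness[of _ "\<lambda>j. int j - 1" "\<lambda>i. nat (i + 1)"])
    fix a :: int assume "a \<in> {- 1..int d}"
    then show "int (nat (a + 1)) - 1 = a" "nat (a + 1) \<in> {..Suc d}" by auto
  next
    fix b assume "b \<in> {..Suc d}"
    then show "nat (int b - 1 + 1) = b" "int b - 1 \<in> {- 1..int d}" by auto
  next
    fix a :: int assume a: "a \<in> {- 1..int d}"
    then have "Suc d - nat (a + 1) = nat (int d - a)" by auto
    moreover have "int (nat (a + 1)) - 1 = a" using a by auto
    ultimately show "monom (Fv d (nat (a + 1))) (Suc d - nat (a + 1)) = monom (Fnum a (int d)) (nat (int d - a))"
      by (simp add: Fv_def)
  qed
  show ?thesis
    unfolding Hpoly_def eq pcompose_sum pcompose_monom ..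
qed

lemma coeff_Hpoly: "coeff (Hpoly d) t = (\<Sum>j\<le>Suc d. Fv d j * coeff ([:-1, 1:] ^ (Suc d - j)) t)"
  unfolding Hpoly_eq coeff_sum coeff_smult ..

lemma Hnum1: assumes "d \<ge> 1" shows "Hnum 1 d = Fv d 1"
proof -
  have "Hnum 1 d = (\<Sum>j\<le>Suc d. Fv d j * coeff ([:-1, 1:] ^ (Suc d - j)) d)"
    unfolding Hnum_def coeff_Hpoly by simp
  also have "\<dots> = (\<Sum>j\<le>Suc d. if j = 1 then Fv d 1 else 0)"
  proof (intro sum.cong refl)
    fix j assume "j \<in> {..Suc d}"
    show "Fv d j * coeff ([:-1, 1:] ^ (Suc d - j)) d = (if j = 1 then Fv d 1 else 0)"
    proof (cases "j = 0")
      case True then show ?thesis using Fv_0[OF assms] by simp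
    next
      case False
      then show ?thesis using assms by (cases "j = 1") (auto simp: coeff_lin_pow)
    qed
  qed
  also have "\<dots> = Fv d 1" using assms by simp
  finally show ?thesis .
qed

lemma Hnumd: assumes "d \<ge> 1" shows "Hnum d d = Fv d 1"
proof -
  have pw: "(-1::real)^(Suc d - j - 1) = - ((-1)^(Suc d) * (-1)^j)" if "j < Suc d" for j
  proof -
    define e where "e = Suc d - j - 1"
    have "Suc d = e + Suc j" using that by (simp add: e_def)
    then have a: "(-1::real)^(Suc d) = - ((-1)^e * (-1)^j)" by (simp add: power_add)
    have sq: "(-1::real)^j * (-1)^j = 1" by (cases "even j") simp_all
    have "- ((-1)^(Suc d) * (-1)^j) = (-1::real)^e * ((-1)^j * (-1)^j)" unfolding a by (simp add: algebra_simps)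
    then show ?thesis unfolding e_def[symmetric] sq by simp
  qed
  have "Hnum d d = (\<Sum>j\<le>Suc d. Fv d j * coeff ([:-1, 1:] ^ (Suc d - j)) 1)"
    unfolding Hnum_def coeff_Hpoly by simp
  also have "\<dots> = (\<Sum>j\<le>Suc d. - ((-1)^(Suc d)) * (real (Suc d) * ((-1)^j * Fv d j) - (-1)^j * real j * Fv d j))"
  proof (intro sum.cong refl)
    fix j assume j: "j \<in> {..Suc d}"
    show "Fv d j * coeff ([:-1, 1:] ^ (Suc d - j)) 1 = - ((-1)^(Suc d)) * (real (Suc d) * ((-1)^j * Fv d j) - (-1)^j * real j * Fv d j)"
    proof (cases "j = Suc d")
      case True then show ?thesis by simp
    next
      case False
      then have "j < Suc d" using j by simp
      then have c: "coeff ([:-1, 1:] ^ (Suc d - j)) 1 = (real (Suc d) - real j) * (- ((-1)^(Suc d) * (-1)^j))"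
        using pw[of j] by (simp add: coeff_lin_pow of_nat_diff)
      show ?thesis unfolding c by (simp add: algebra_simps)
    qed
  qed
  also have "\<dots> = - ((-1)^(Suc d)) * (real (Suc d) * (\<Sum>j\<le>Suc d. (-1)^j * Fv d j) - (\<Sum>j\<le>Suc d. (-1)^j * real j * Fv d j))"
    by (simp only: sum_distrib_left sum_subtractf[symmetric])
  also have "\<dots> = Fv d 1"
    unfolding alt_sum_Fv[OF assms] alt_sum_j_Fv[OF assms] by simp
  finally show ?thesis .
qed


lemma lin_rec_lim:
  fixes x b :: "nat \<Rightarrow> real"
  assumes rec: "\<And>k. x (Suc k) = r * x k + b k" and r: "0 \<le> r" "r < 1" and b: "b \<longlonglongrightarrow> B"
  shows "x \<longlonglongrightarrow> B / (1 - r)"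
proof -
  define L where "L = B / (1 - r)"
  define y where "y k = x k - L" for k
  have L: "L = r * L + B" using r by (simp add: L_def field_simps)
  have yrec: "y (Suc k) = r * y k + (b k - B)" for k
    unfolding y_def using rec[of k] L by (simp add: algebra_simps)
  have "y \<longlonglongrightarrow> 0"
    unfolding LIMSEQ_iff
  proof (intro allI impI)
    fix \<epsilon> :: real assume e: "\<epsilon> > 0"
    have "\<epsilon> * (1 - r) / 2 > 0" using e r by simp
    then obtain N where N: "\<And>k. k \<ge> N \<Longrightarrow> norm (b k - B) < \<epsilon> * (1 - r) / 2"
      using b unfolding LIMSEQ_iff by blast
    have bound: "\<bar>y k\<bar> \<le> r ^ (k - N) * \<bar>y N\<bar> + \<epsilon> / 2" if "k \<ge> N" for k
      using that
    proof (induction k rule: dec_induct)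
      case base then show ?case using e by simp
    next
      case (step k)
      have "\<bar>y (Suc k)\<bar> \<le> r * \<bar>y k\<bar> + \<bar>b k - B\<bar>"
        unfolding yrec using abs_triangle_ineq[of "r * y k" "b k - B"] r by (simp add: abs_mult)
      also have "\<dots> \<le> r * (r ^ (k - N) * \<bar>y N\<bar> + \<epsilon> / 2) + \<epsilon> * (1 - r) / 2"
        using step.IH N[OF step.hyps(1)] r by (intro add_mono mult_left_mono) auto
      also have "\<dots> = r ^ (Suc k - N) * \<bar>y N\<bar> + \<epsilon> / 2"
        using step.hyps by (simp add: Suc_diff_le field_simps)
      finally show ?case .
    qed
    have "(\<lambda>k. r ^ k * \<bar>y N\<bar>) \<longlonglongrightarrow> 0 * \<bar>y N\<bar>"
      using r by (intro tendsto_intros LIMSEQ_power_zero) simp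
    then obtain M where M: "\<And>k. k \<ge> M \<Longrightarrow> r ^ k * \<bar>y N\<bar> < \<epsilon> / 2"
      using e unfolding LIMSEQ_iff by (metis abs_of_nonneg half_gt_zero mult_nonneg_nonneg r(1) real_norm_def zero_le_power abs_ge_zero diff_0_right mult_zero_left)
    show "\<exists>no. \<forall>n\<ge>no. norm (y n - 0) < \<epsilon>"
    proof (intro exI allI impI)
      fix n assume "n \<ge> N + M"
      then have "\<bar>y n\<bar> \<le> r ^ (n - N) * \<bar>y N\<bar> + \<epsilon> / 2" "r ^ (n - N) * \<bar>y N\<bar> < \<epsilon> / 2"
        using bound M by auto
      then show "norm (y n - 0) < \<epsilon>" by simp
    qed
  qed
  then have "(\<lambda>k. y k + L) \<longlonglongrightarrow> 0 + L" by (intro tendsto_intros)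
  then show ?thesis by (simp add: y_def L_def)
qed

context
  fixes \<Delta> :: "'a set set" and d :: nat
  assumes sc: "simplicial_complex \<Delta>" and fin: "finite \<Delta>" and mx: "maxc \<Delta> (Suc d)" and d1: "d \<ge> 1"
begin

definition gk :: "nat \<Rightarrow> nat \<Rightarrow> real" where
  "gk k j = real (face_count (bary_iter \<Delta> k) j)"

lemma gk_Suc: "gk (Suc k) m = (\<Sum>j\<le>Suc d. gk k j * real (aS j m))"
  unfolding gk_def fc_iter_Suc[OF sc fin mx] by simp

lemma gk_top: "gk k (Suc d) = fact (Suc d) ^ k * gk 0 (Suc d)"
proof (induction k)
  case 0 then show ?case by simp
next
  case (Suc k)
  have "gk (Suc k) (Suc d) = (\<Sum>j\<le>Suc d. if j = Suc d then gk k (Suc d) * fact (Suc d) else 0)"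
    unfolding gk_Suc by (intro sum.cong refl) (auto simp: aS_same aS_less algebra_simps)
  also have "\<dots> = gk k (Suc d) * fact (Suc d)" by (subst sum.delta) auto
  finally show ?case using Suc by (simp add: mult_ac)
qed

lemma gk_lim: "m \<le> Suc d \<Longrightarrow> (\<lambda>k. gk k m / fact (Suc d) ^ k) \<longlonglongrightarrow> gk 0 (Suc d) * Fv d m"
proof (induction "Suc d - m" arbitrary: m rule: less_induct)
  case less
  define lam :: real where "lam = fact (Suc d)"
  have lpos: "lam > 0" by (simp add: lam_def)
  show ?case
  proof (cases "m = Suc d")
    case True
    have "(\<lambda>k. gk k m / fact (Suc d) ^ k) = (\<lambda>k. gk 0 (Suc d))"
    proof (rule ext)
      fix k
      have "gk k m = fact (Suc d) ^ k * gk 0 (Suc d)" using True gk_top[of k] by simp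
      then show "gk k m / fact (Suc d) ^ k = gk 0 (Suc d)" by simp
    qed
    then show ?thesis using True by (simp add: Fv_top)
  next
    case False
    then have m: "m < Suc d" using less.prems by simp
    define x where "x k = gk k m / lam ^ k" for k
    define r where "r = fact m / lam"
    define b where "b k = (\<Sum>j\<in>{m<..Suc d}. real (aS j m) * (gk k j / lam ^ k)) / lam" for k
    define B where "B = (\<Sum>j\<in>{m<..Suc d}. real (aS j m) * (gk 0 (Suc d) * Fv d j)) / lam"
    have IH: "(\<lambda>k. gk k j / lam ^ k) \<longlonglongrightarrow> gk 0 (Suc d) * Fv d j" if "j \<in> {m<..Suc d}" for j
      unfolding lam_def using that by (intro less.hyps) auto
    have rec: "x (Suc k) = r * x k + b k" for k
    proof -
      have "gk (Suc k) m = (\<Sum>j<m. gk k j * real (aS j m)) + gk k m * real (aS m m) + (\<Sum>j\<in>{m<..Suc d}. gk k j * real (aS j m))"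
        unfolding gk_Suc using m by (intro sum_split3) simp
      also have "(\<Sum>j<m. gk k j * real (aS j m)) = 0" by (intro sum.neutral ballI) (simp add: aS_less)
      finally have "gk (Suc k) m = gk k m * fact m + (\<Sum>j\<in>{m<..Suc d}. gk k j * real (aS j m))"
        by (simp add: aS_same)
      moreover have S': "(\<Sum>j\<in>{m<..Suc d}. real (aS j m) * (gk k j / lam ^ k)) = (\<Sum>j\<in>{m<..Suc d}. gk k j * real (aS j m)) / lam ^ k"
        by (simp add: sum_divide_distrib algebra_simps)
      ultimately show ?thesis
        unfolding x_def r_def b_def S' using lpos
        by (simp add: field_simps)
    qed
    have r01: "0 \<le> r" "r < 1" using fact_lt_top[OF d1 m] lpos by (auto simp: r_def lam_def)
    have "b \<longlonglongrightarrow> B"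
      unfolding b_def B_def using IH lpos by (intro tendsto_intros) auto
    then have "x \<longlonglongrightarrow> B / (1 - r)" using lin_rec_lim[of x r b B, OF rec r01] by blast
    moreover have "B / (1 - r) = gk 0 (Suc d) * Fv d m"
    proof -
      have "(\<Sum>j\<in>{m<..Suc d}. real (aS j m) * (gk 0 (Suc d) * Fv d j)) = gk 0 (Suc d) * (Fv d m * (lam - fact m))"
      proof -
        have "(\<Sum>j\<in>{m<..Suc d}. real (aS j m) * (gk 0 (Suc d) * Fv d j)) = gk 0 (Suc d) * (\<Sum>j\<in>{m<..Suc d}. real (aS j m) * Fv d j)"
          by (simp add: sum_distrib_left algebra_simps)
        also have "\<dots> = gk 0 (Suc d) * (Fv d m * (lam - fact m))"
          using Fv_rec[OF d1 m] by (simp add: lam_def)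
        finally show ?thesis .
      qed
      moreover have "lam - fact m \<noteq> 0" using fact_lt_top[OF d1 m] by (simp add: lam_def)
      ultimately show ?thesis unfolding B_def r_def using lpos by (simp add: field_simps)
    qed
    ultimately show ?thesis unfolding x_def lam_def by simp
  qed
qed

end


lemma prod_linear_coeffs:
  fixes r :: "nat \<Rightarrow> 'b::comm_ring_1"
  shows "coeff (\<Prod>i<n. [:-r i, 1:]) n = 1 \<and> (\<forall>j>n. coeff (\<Prod>i<n. [:-r i, 1:]) j = 0) \<and>
         (n \<ge> 1 \<longrightarrow> coeff (\<Prod>i<n. [:-r i, 1:]) (n - 1) = - (\<Sum>i<n. r i))"
proof (induction n)
  case 0 then show ?case by (auto simp: coeff_1)
next
  case (Suc n)
  define P where "P = (\<Prod>i<n. [:-r i, 1:])"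
  have e: "(\<Prod>i<Suc n. [:-r i, 1:]) = smult (- r n) P + pCons 0 P"
    unfolding P_def by (simp add: mult_pCons_right)
  have c: "coeff (\<Prod>i<Suc n. [:-r i, 1:]) j = - r n * coeff P j + (if j = 0 then 0 else coeff P (j - 1))" for j
    unfolding e by (cases j) auto
  have IH: "coeff P n = 1" "\<And>j. j > n \<Longrightarrow> coeff P j = 0" "n \<ge> 1 \<Longrightarrow> coeff P (n - 1) = - (\<Sum>i<n. r i)"
    using Suc.IH unfolding P_def by auto
  show ?case
  proof (intro conjI allI impI)
    show "coeff (\<Prod>i<Suc n. [:-r i, 1:]) (Suc n) = 1" unfolding c using IH by simp
  next
    fix j assume "j > Suc n"
    then show "coeff (\<Prod>i<Suc n. [:-r i, 1:]) j = 0" unfolding c using IH by simp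
  next
    show "coeff (\<Prod>i<Suc n. [:-r i, 1:]) (Suc n - 1) = - (\<Sum>i<Suc n. r i)"
    proof (cases n)
      case 0 then show ?thesis unfolding c using IH by simp
    next
      case (Suc n')
      then show ?thesis unfolding c using IH by simp
    qed
  qed
qed

lemma monic_root_big:
  fixes p :: "complex poly" and n :: nat and R :: real
  assumes "degree p = n" "coeff p n = 1" "n \<ge> 1" "norm (coeff p (n - 1)) \<ge> real n * R"
  shows "\<exists>z. poly p z = 0 \<and> norm z \<ge> R"
proof -
  obtain r where r: "smult (lead_coeff p) (\<Prod>i<degree p. [:-r i, 1:]) = p"
    by (rule complex_poly_decompose')
  then have pr: "p = (\<Prod>i<n. [:-r i, 1:])" using assms by simp
  have roots: "poly p (r i) = 0" if "i < n" for i
    unfolding pr poly_prod using that by (intro prod_zero) auto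
  show ?thesis
  proof (rule ccontr)
    assume "\<not> ?thesis"
    then have small: "norm (r i) < R" if "i < n" for i using roots that by force
    have "norm (coeff p (n - 1)) = norm (\<Sum>i<n. r i)"
      unfolding pr using prod_linear_coeffs[of r n] assms(3) by simp
    also have "\<dots> \<le> (\<Sum>i<n. norm (r i))" by (rule norm_sum)
    also have "\<dots> < (\<Sum>i<n. R)" using assms(3) small by (intro sum_strict_mono) (auto simp: lessThan_empty_iff)
    also have "\<dots> = real n * R" by simp
    finally show False using assms(4) by simp
  qed
qed

lemma root_bound:
  fixes p :: "complex poly" and z :: complex and L \<epsilon> :: real
  assumes "degree p = n" "coeff p n = 1" "n \<ge> 1" "poly p z = 0" "L > 0" "\<epsilon> > 0" "norm z \<ge> \<epsilon> * L"
  shows "norm (z / of_real L + coeff p (n - 1) / of_real L) \<le>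
           (\<Sum>i<n - 1. norm (coeff p i) / (L ^ (n - i) * \<epsilon> ^ (n - 1 - i)))"
proof -
  have zpos: "norm z > 0" using assms(5-7) by (smt (verit) mult_pos_pos)
  have "poly p z = (\<Sum>i\<le>n. coeff p i * z ^ i)" using assms(1) by (simp add: poly_altdef)
  also have "\<dots> = (\<Sum>i<n - 1. coeff p i * z ^ i) + coeff p (n - 1) * z ^ (n - 1) + coeff p n * z ^ n"
  proof -
    have "{..n} = {..<n - 1} \<union> {n - 1, n}" using assms(3) by auto
    then show ?thesis using assms(3) by (simp add: sum.union_disjoint add.assoc)
  qed
  finally have S: "0 = (\<Sum>i<n - 1. coeff p i * z ^ i) + coeff p (n - 1) * z ^ (n - 1) + z ^ n"
    using assms(2,4) by simp
  obtain n' where n': "n = Suc n'" using assms(3) by (cases n) auto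
  have zn: "z ^ n = z ^ (n - 1) * z" unfolding n' by simp
  have "z ^ (n - 1) * (z + coeff p (n - 1)) = - (\<Sum>i<n - 1. coeff p i * z ^ i)"
    using S unfolding zn by (simp add: algebra_simps eq_neg_iff_add_eq_0)
  then have "norm z ^ (n - 1) * norm (z + coeff p (n - 1)) \<le> (\<Sum>i<n - 1. norm (coeff p i) * norm z ^ i)"
    by (metis (no_types, lifting) norm_minus_cancel norm_mult norm_power norm_sum order.trans sum_mono order_refl)
  then have A: "norm (z + coeff p (n - 1)) \<le> (\<Sum>i<n - 1. norm (coeff p i) * norm z ^ i) / norm z ^ (n - 1)"
    using zpos by (simp add: field_simps)
  also have "\<dots> = (\<Sum>i<n - 1. norm (coeff p i) / norm z ^ (n - 1 - i))"
    unfolding sum_divide_distrib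
  proof (intro sum.cong refl)
    fix i assume "i \<in> {..<n - 1}"
    then have "norm z ^ (n - 1) = norm z ^ i * norm z ^ (n - 1 - i)" by (simp add: power_add[symmetric])
    then show "norm (coeff p i) * norm z ^ i / norm z ^ (n - 1) = norm (coeff p i) / norm z ^ (n - 1 - i)"
      using zpos by simp
  qed
  also have "\<dots> \<le> (\<Sum>i<n - 1. norm (coeff p i) / (\<epsilon> * L) ^ (n - 1 - i))"
    using assms(5-7) zpos by (intro sum_mono divide_left_mono power_mono mult_pos_pos zero_less_power) auto
  finally have B: "norm (z + coeff p (n - 1)) / L \<le> (\<Sum>i<n - 1. norm (coeff p i) / (\<epsilon> * L) ^ (n - 1 - i)) / L"
    using assms(5) by (simp add: divide_right_mono)
  have "norm (z / of_real L + coeff p (n - 1) / of_real L) = norm (z + coeff p (n - 1)) / L"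
    using assms(5) by (simp add: add_divide_distrib[symmetric] norm_divide)
  also note B
  also have "(\<Sum>i<n - 1. norm (coeff p i) / (\<epsilon> * L) ^ (n - 1 - i)) / L =
      (\<Sum>i<n - 1. norm (coeff p i) / (L ^ (n - i) * \<epsilon> ^ (n - 1 - i)))"
    unfolding sum_divide_distrib
  proof (intro sum.cong refl)
    fix i assume "i \<in> {..<n - 1}"
    then have "L ^ (n - i) = L * L ^ (n - 1 - i)" by (simp add: power_Suc[symmetric] Suc_diff_Suc)
    then show "norm (coeff p i) / (\<epsilon> * L) ^ (n - 1 - i) / L = norm (coeff p i) / (L ^ (n - i) * \<epsilon> ^ (n - 1 - i))"
      by (simp add: power_mult_distrib field_simps)
  qed
  finally show ?thesis .
qed


lemma root_asym:
  fixes p :: "nat \<Rightarrow> complex poly" and L :: "nat \<Rightarrow> real" and \<rho> :: "nat \<Rightarrow> complex"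
    and n :: nat and c :: complex
  assumes n1: "n \<ge> 1" and deg: "\<And>k. degree (p k) = n" and mon: "\<And>k. coeff (p k) n = 1"
    and L: "\<And>k. L k > 0"
    and c1: "(\<lambda>k. coeff (p k) (n - 1) / of_real (L k)) \<longlonglongrightarrow> c" and c0: "c \<noteq> 0"
    and cm: "\<And>i. i < n - 1 \<Longrightarrow> (\<lambda>k. norm (coeff (p k) i) / L k ^ (n - i)) \<longlonglongrightarrow> 0"
    and root: "\<And>k. poly (p k) (\<rho> k) = 0"
    and mx: "\<And>k z. poly (p k) z = 0 \<Longrightarrow> norm z \<le> norm (\<rho> k)"
  shows "(\<lambda>k. \<rho> k / of_real (L k)) \<longlonglongrightarrow> - c"
  unfolding LIMSEQ_iff
proof (intro allI impI)
  fix \<eta> :: real assume eta: "\<eta> > 0"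
  define \<epsilon> where "\<epsilon> = norm c / (2 * real n)"
  have epos: "\<epsilon> > 0" using c0 n1 by (simp add: \<epsilon>_def)
  define b1 where "b1 k = coeff (p k) (n - 1) / of_real (L k)" for k
  define \<delta> where "\<delta> k = (\<Sum>i<n - 1. norm (coeff (p k) i) / (L k ^ (n - i) * \<epsilon> ^ (n - 1 - i)))" for k
  have "\<delta> \<longlonglongrightarrow> (\<Sum>i<n - 1. 0 / \<epsilon> ^ (n - 1 - i))"
    unfolding \<delta>_def
  proof (intro tendsto_sum)
    fix i assume "i \<in> {..<n - 1}"
    then have "(\<lambda>k. norm (coeff (p k) i) / L k ^ (n - i) / \<epsilon> ^ (n - 1 - i)) \<longlonglongrightarrow> 0 / \<epsilon> ^ (n - 1 - i)"
      using cm epos by (intro tendsto_intros) auto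
    then show "(\<lambda>k. norm (coeff (p k) i) / (L k ^ (n - i) * \<epsilon> ^ (n - 1 - i))) \<longlonglongrightarrow> 0 / \<epsilon> ^ (n - 1 - i)"
      by (simp add: divide_divide_eq_left)
  qed
  then have "\<delta> \<longlonglongrightarrow> 0" by simp
  then obtain N2 where N2: "\<And>k. k \<ge> N2 \<Longrightarrow> norm (\<delta> k - 0) < \<eta> / 2"
    using eta unfolding LIMSEQ_iff by (meson half_gt_zero)
  have "min (\<eta> / 2) (norm c / 2) > 0" using eta c0 by simp
  then obtain N1 where N1: "\<And>k. k \<ge> N1 \<Longrightarrow> norm (b1 k - c) < min (\<eta> / 2) (norm c / 2)"
    using c1 unfolding LIMSEQ_iff b1_def by blast
  show "\<exists>no. \<forall>k\<ge>no. norm (\<rho> k / of_real (L k) - - c) < \<eta>"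
  proof (intro exI allI impI)
    fix k assume k: "k \<ge> max N1 N2"
    have d: "\<delta> k < \<eta> / 2" using N2[of k] k by simp
    have b: "norm (b1 k - c) < \<eta> / 2" "norm (b1 k - c) < norm c / 2" using N1[of k] k by auto
    have "norm c - norm (b1 k) \<le> norm (b1 k - c)" by (metis norm_minus_commute norm_triangle_ineq2)
    then have nb: "norm (b1 k) > norm c / 2" using b(2) by simp
    have "norm (coeff (p k) (n - 1)) = norm (b1 k) * L k"
      using L[of k] by (simp add: b1_def norm_divide)
    also have "\<dots> \<ge> real n * (\<epsilon> * L k)"
    proof -
      have "real n * \<epsilon> = norm c / 2" using n1 by (simp add: \<epsilon>_def)
      then show ?thesis using nb L[of k] by (simp add: mult.assoc[symmetric])
    qed
    finally obtain z where z: "poly (p k) z = 0" "norm z \<ge> \<epsilon> * L k"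
      using monic_root_big[OF deg mon n1] by blast
    have big: "norm (\<rho> k) \<ge> \<epsilon> * L k" using mx[OF z(1)] z(2) by simp
    have "norm (\<rho> k / of_real (L k) + b1 k) \<le> \<delta> k"
      unfolding b1_def \<delta>_def using root_bound[OF deg mon n1 root L epos big] .
    then have "norm (\<rho> k / of_real (L k) + b1 k) < \<eta> / 2" using d by simp
    moreover have "norm (\<rho> k / of_real (L k) - - c) \<le> norm (\<rho> k / of_real (L k) + b1 k) + norm (b1 k - c)"
      using norm_triangle_ineq[of "\<rho> k / of_real (L k) + b1 k" "- (b1 k - c)"] norm_minus_commute[of c "b1 k"] by (simp add: algebra_simps)
    ultimately show "norm (\<rho> k / of_real (L k) - - c) < \<eta>" using b(1) by simp
  qed
qed


lemma coeff_of_nat_mult: "coeff (of_nat n * p) t = of_nat n * coeff p t"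
  by (induction n) (simp_all add: algebra_simps)

lemma coeff_lin_pow_complex:
  "coeff ([:-1, 1:] ^ n :: complex poly) t = complex_of_real (coeff ([:-1, 1:] ^ n :: real poly) t)"
  by (simp add: coeff_lin_pow)

lemma decay:
  fixes x :: "nat \<Rightarrow> complex" and lam :: real
  assumes lam: "lam > 1" and conv: "(\<lambda>k. x k / of_real (lam ^ k)) \<longlonglongrightarrow> a" and m: "m \<ge> 2"
  shows "(\<lambda>k. norm (x k) / (lam ^ k) ^ m) \<longlonglongrightarrow> 0"
proof -
  obtain m' where m': "m = Suc m'" "m' \<ge> 1" using m by (cases m) auto
  have eq: "norm (x k) / (lam ^ k) ^ m = norm (x k / of_real (lam ^ k)) * inverse (lam ^ k) ^ m'" for k
    using lam unfolding m' by (simp add: norm_divide norm_power field_simps power_inverse)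
  have "(\<lambda>k. norm (x k / of_real (lam ^ k)) * inverse (lam ^ k) ^ m') \<longlonglongrightarrow> norm a * 0 ^ m'"
    by (intro tendsto_intros conv LIMSEQ_inverse_realpow_zero lam)
  then show ?thesis unfolding eq using m' by (simp add: power_0_left)
qed

context
  fixes \<Delta> :: "'a set set" and d :: nat
  assumes sc: "simplicial_complex \<Delta>" and fin: "finite \<Delta>" and mx: "maxc \<Delta> (Suc d)" and d1: "d \<ge> 1"
begin

lemma props_k: "simplicial_complex (bary_iter \<Delta> k)" "finite (bary_iter \<Delta> k)" "maxc (bary_iter \<Delta> k) (Suc d)"
  using bary_iter_props[OF sc fin mx] by auto

lemma coeff_h: "coeff (h_poly (bary_iter \<Delta> k)) t =
    (\<Sum>j\<le>Suc d. complex_of_real (gk \<Delta> k j * coeff ([:-1, 1:] ^ (Suc d - j)) t))"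
proof -
  have M: "Max (card ` bary_iter \<Delta> k) = Suc d" using maxc_Max props_k by blast
  show ?thesis
    unfolding h_poly_def Let_def M coeff_sum coeff_of_nat_mult coeff_lin_pow_complex
    by (simp add: gk_def[OF sc fin mx d1])
qed

lemma coeff_conv: "(\<lambda>k. coeff (h_poly (bary_iter \<Delta> k)) t / of_real (fact (Suc d) ^ k)) \<longlonglongrightarrow>
    complex_of_real (gk \<Delta> 0 (Suc d) * coeff (Hpoly d) t)"
proof -
  have eq: "coeff (h_poly (bary_iter \<Delta> k)) t / of_real (fact (Suc d) ^ k) =
      complex_of_real (\<Sum>j\<le>Suc d. gk \<Delta> k j / fact (Suc d) ^ k * coeff ([:-1, 1:] ^ (Suc d - j)) t)" for k
    unfolding coeff_h of_real_sum sum_divide_distrib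
  proof (intro sum.cong refl)
    fix j
    show "complex_of_real (gk \<Delta> k j * coeff ([:- 1, 1:] ^ (Suc d - j)) t) / complex_of_real (fact (Suc d) ^ k) =
        complex_of_real (gk \<Delta> k j / fact (Suc d) ^ k * coeff ([:- 1, 1:] ^ (Suc d - j)) t)"
      by (simp only: of_real_divide[symmetric]) (simp add: algebra_simps)
  qed
  have "(\<lambda>k. \<Sum>j\<le>Suc d. gk \<Delta> k j / fact (Suc d) ^ k * coeff ([:-1, 1:] ^ (Suc d - j)) t) \<longlonglongrightarrow>
      (\<Sum>j\<le>Suc d. gk \<Delta> 0 (Suc d) * Fv d j * coeff ([:-1, 1:] ^ (Suc d - j)) t)"
    by (intro tendsto_sum tendsto_mult tendsto_const gk_lim[OF sc fin mx d1]) auto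
  also have "(\<Sum>j\<le>Suc d. gk \<Delta> 0 (Suc d) * Fv d j * coeff ([:-1, 1:] ^ (Suc d - j)) t) = gk \<Delta> 0 (Suc d) * coeff (Hpoly d) t"
    unfolding coeff_Hpoly sum_distrib_left by (simp only: mult.assoc)
  finally show ?thesis unfolding eq by (intro tendsto_of_real)
qed

lemma fc0: "gk \<Delta> k 0 = 1"
  using fc_iter_0[OF sc fin mx] by (simp add: gk_def[OF sc fin mx d1])

lemma h_top: "coeff (h_poly (bary_iter \<Delta> k)) (Suc d) = 1"
proof -
  have "coeff (h_poly (bary_iter \<Delta> k)) (Suc d) = (\<Sum>j\<le>Suc d. if j = 0 then 1 else 0)"
    unfolding coeff_h by (intro sum.cong refl) (auto simp: coeff_lin_pow fc0)
  then show ?thesis by simp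
qed

lemma h_deg: "degree (h_poly (bary_iter \<Delta> k)) = Suc d"
proof (rule antisym)
  show "degree (h_poly (bary_iter \<Delta> k)) \<le> Suc d"
  proof (rule degree_le, intro allI impI)
    fix i assume "i > Suc d"
    then show "coeff (h_poly (bary_iter \<Delta> k)) i = 0" unfolding coeff_h by (intro sum.neutral) (auto simp: coeff_lin_pow)
  qed
  show "Suc d \<le> degree (h_poly (bary_iter \<Delta> k))" using h_top by (intro le_degree) simp
qed

lemma h_coeff0: "coeff (h_poly (bary_iter \<Delta> k)) 0 = of_int (- ((-1) ^ Suc d * red_euler_char \<Delta>))"
proof -
  have "coeff (h_poly (bary_iter \<Delta> k)) 0 = of_int (\<Sum>j\<le>Suc d. (-1)^(Suc d) * ((-1)^j * int (face_count (bary_iter \<Delta> k) j)))"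
    unfolding coeff_h
  proof (simp only: of_int_sum, intro sum.cong refl)
    fix j assume "j \<in> {..Suc d}"
    then have "(-1::int)^(Suc d - j) = (-1)^(Suc d) * (-1)^j"
    proof -
      assume j: "j \<in> {..Suc d}"
      have "(-1::int)^(Suc d) = (-1)^(Suc d - j) * (-1)^j" using j by (simp add: power_add[symmetric])
      moreover have "(-1::int)^j * (-1)^j = 1" by (cases "even j") simp_all
      ultimately show ?thesis by (metis mult.assoc mult.right_neutral)
    qed
    then have i2: "(-1)^(Suc d) * ((-1)^j * int (face_count (bary_iter \<Delta> k) j)) = (-1::int)^(Suc d - j) * int (face_count (bary_iter \<Delta> k) j)"
      by (simp add: mult.assoc[symmetric])
    have i1: "gk \<Delta> k j * coeff ([:-1, 1:] ^ (Suc d - j)) 0 = real_of_int ((-1)^(Suc d - j) * int (face_count (bary_iter \<Delta> k) j))"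
      by (simp add: gk_def[OF sc fin mx d1] coeff_lin_pow)
    show "complex_of_real (gk \<Delta> k j * coeff ([:- 1, 1:] ^ (Suc d - j)) 0) =
        of_int ((-1)^(Suc d) * ((-1)^j * int (face_count (bary_iter \<Delta> k) j)))"
      unfolding i1 i2 of_real_of_int_eq ..
  qed
  also have "(\<Sum>j\<le>Suc d. (-1)^(Suc d) * ((-1)^j * int (face_count (bary_iter \<Delta> k) j))) =
      (-1)^(Suc d) * (\<Sum>j\<le>Suc d. (-1)^j * int (face_count \<Delta> j))"
    unfolding sum_distrib_left[symmetric] euler_iter[OF sc fin mx] ..
  also have "\<dots> = - ((-1) ^ Suc d * red_euler_char \<Delta>)"
    unfolding red_euler_fc[OF sc fin mx] by (simp only: mult_minus_right minus_minus)
  finally show ?thesis .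
qed

end


theorem theorem1p2:
  fixes \<Delta> :: "'a set set" and d :: nat and \<rho>inf \<rho>0 :: "nat \<Rightarrow> complex"
  assumes "simplicial_complex \<Delta>" and "finite \<Delta>"
    and "cdim \<Delta> = int d" and "d \<ge> 1"
    and "\<And>k. poly (h_poly (bary_iter \<Delta> k)) (\<rho>inf k) = 0"
    and "\<And>k z. poly (h_poly (bary_iter \<Delta> k)) z = 0 \<Longrightarrow> norm z \<le> norm (\<rho>inf k)"
    and "\<And>k. poly (h_poly (bary_iter \<Delta> k)) (\<rho>0 k) = 0"
    and "\<And>k z. poly (h_poly (bary_iter \<Delta> k)) z = 0 \<Longrightarrow> norm (\<rho>0 k) \<le> norm z"
  shows "\<rho>inf \<sim>[sequentially]
           (\<lambda>k. complex_of_real (- Hnum 1 d * real (fvec \<Delta> (int d)) * fact (d + 1) ^ k)) \<and>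
         (\<lambda>k. real_of_int \<bar>red_euler_char \<Delta>\<bar>) \<sim>[sequentially]
           (\<lambda>k. Hnum 1 d * real (fvec \<Delta> (int d)) * norm (\<rho>0 k) * fact (d + 1) ^ k)"
proof -
  note sc = assms(1) and fin = assms(2) and d1 = assms(4)
  have ne: "card ` \<Delta> \<noteq> {}" using sc by (auto simp: simplicial_complex_def)
  have Mx: "Max (card ` \<Delta>) = Suc d" using assms(3) by (simp add: cdim_def)
  have mx: "maxc \<Delta> (Suc d)"
    unfolding maxc_def
  proof
    show "\<forall>\<sigma>\<in>\<Delta>. card \<sigma> \<le> Suc d" using fin Mx[symmetric] by auto
    show "\<exists>\<sigma>\<in>\<Delta>. card \<sigma> = Suc d" using Max_in[OF _ ne] fin Mx by force
  qed
  define h where "h k = h_poly (bary_iter \<Delta> k)" for k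
  define lam :: real where "lam = fact (Suc d)"
  define g0 where "g0 = gk \<Delta> 0 (Suc d)"
  have lam1: "lam > 1"
  proof -
    have "(fact 1 :: real) < fact (Suc d)" using d1 by (intro fact_less_mono) auto
    then show ?thesis by (simp add: lam_def)
  qed
  have nd: "nat (int d + 1) = Suc d" by simp
  have fD: "real (fvec \<Delta> (int d)) = g0"
    unfolding g0_def gk_def[OF sc fin mx d1] fvec_def nd using bary_iter_0_props(3)[OF sc fin] by simp
  have g0pos: "g0 > 0"
  proof -
    obtain \<tau> where "\<tau> \<in> \<Delta>" "card \<tau> = Suc d" using mx by (auto simp: maxc_def)
    then have "face_count \<Delta> (Suc d) > 0" using fin by (auto simp: face_count_def card_gt_0_iff)
    then show ?thesis using fD unfolding fvec_def nd by simp
  qed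
  have F1: "Fv d 1 > 0" by (rule Fv_1_pos[OF d1])
  have H1: "Hnum 1 d = Fv d 1" by (rule Hnum1[OF d1])
  have cHd: "coeff (Hpoly d) d = Fv d 1" using H1 by (simp add: Hnum_def)
  have cH1: "coeff (Hpoly d) 1 = Fv d 1" using Hnumd[OF d1] by (simp add: Hnum_def)
  have conv: "(\<lambda>k. coeff (h k) t / of_real (lam ^ k)) \<longlonglongrightarrow> complex_of_real (g0 * coeff (Hpoly d) t)" for t
    unfolding h_def lam_def g0_def by (rule coeff_conv[OF sc fin mx d1])
  have hdeg: "degree (h k) = Suc d" "coeff (h k) (Suc d) = 1" for k
    unfolding h_def using h_deg[OF sc fin mx d1] h_top[OF sc fin mx d1] by auto
  define c' where "c' = g0 * Fv d 1"
  have c'pos: "c' > 0" using g0pos F1 by (simp add: c'_def)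

  have lim1: "(\<lambda>k. \<rho>inf k / of_real (lam ^ k)) \<longlonglongrightarrow> - complex_of_real c'"
  proof -
    have "(\<lambda>k. \<rho>inf k / of_real (lam ^ k)) \<longlonglongrightarrow> - complex_of_real (g0 * coeff (Hpoly d) (Suc d - 1))"
    proof (rule root_asym[of "Suc d" h])
      show "Suc d \<ge> 1" by simp
      show "\<And>k. degree (h k) = Suc d" "\<And>k. coeff (h k) (Suc d) = 1" using hdeg by auto
      show "\<And>k. lam ^ k > 0" using lam1 by simp
      show "(\<lambda>k. coeff (h k) (Suc d - 1) / of_real (lam ^ k)) \<longlonglongrightarrow> complex_of_real (g0 * coeff (Hpoly d) (Suc d - 1))"
        by (rule conv)
      show "complex_of_real (g0 * coeff (Hpoly d) (Suc d - 1)) \<noteq> 0" using g0pos F1 cHd by simp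
      show "\<And>i. i < Suc d - 1 \<Longrightarrow> (\<lambda>k. norm (coeff (h k) i) / (lam ^ k) ^ (Suc d - i)) \<longlonglongrightarrow> 0"
        using lam1 conv by (intro decay) auto
      show "\<And>k. poly (h k) (\<rho>inf k) = 0" using assms(5) by (simp add: h_def)
      show "\<And>k z. poly (h k) z = 0 \<Longrightarrow> norm z \<le> norm (\<rho>inf k)" using assms(6) by (simp add: h_def)
    qed
    then show ?thesis using cHd by (simp add: c'_def)
  qed
  have P1: "\<rho>inf \<sim>[sequentially] (\<lambda>k. complex_of_real (- Hnum 1 d * real (fvec \<Delta> (int d)) * fact (d + 1) ^ k))"
  proof (rule asymp_equivI')
    have eq: "(\<lambda>k. \<rho>inf k / complex_of_real (- Hnum 1 d * real (fvec \<Delta> (int d)) * fact (d + 1) ^ k)) =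
        (\<lambda>k. \<rho>inf k / of_real (lam ^ k) / (- complex_of_real c'))"
      unfolding H1 fD lam_def c'_def by (simp add: field_simps)
    have "(\<lambda>k. \<rho>inf k / of_real (lam ^ k) / (- complex_of_real c')) \<longlonglongrightarrow> (- complex_of_real c') / (- complex_of_real c')"
      using c'pos by (intro tendsto_divide lim1 tendsto_const) simp
    then show "(\<lambda>k. \<rho>inf k / complex_of_real (- Hnum 1 d * real (fvec \<Delta> (int d)) * fact (d + 1) ^ k)) \<longlonglongrightarrow> 1"
      unfolding eq using c'pos by simp
  qed

  define \<chi> where "\<chi> = red_euler_char \<Delta>"
  define C :: complex where "C = of_int (- ((-1) ^ Suc d * \<chi>))"
  have hC: "coeff (h k) 0 = C" for k
    unfolding h_def C_def \<chi>_def by (rule h_coeff0[OF sc fin mx d1])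
  have nC: "norm C = real_of_int \<bar>\<chi>\<bar>"
  proof -
    have "norm C = \<bar>real_of_int (- ((-1) ^ Suc d * \<chi>))\<bar>" unfolding C_def by (simp only: norm_of_int)
    also have "\<dots> = real_of_int \<bar>\<chi>\<bar>" by (simp add: abs_mult)
    finally show ?thesis .
  qed
  have P2: "(\<lambda>k. real_of_int \<bar>red_euler_char \<Delta>\<bar>) \<sim>[sequentially]
           (\<lambda>k. Hnum 1 d * real (fvec \<Delta> (int d)) * norm (\<rho>0 k) * fact (d + 1) ^ k)"
  proof (cases "\<chi> = 0")
    case True
    have "\<rho>0 k = 0" for k
    proof -
      have "poly (h_poly (bary_iter \<Delta> k)) 0 = 0" using hC[of k] True by (simp add: h_def C_def poly_0_coeff_0)
      then show ?thesis using assms(8)[of k 0] by simp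
    qed
    then have "(\<lambda>k. Hnum 1 d * real (fvec \<Delta> (int d)) * norm (\<rho>0 k) * fact (d + 1) ^ k) = (\<lambda>k. real_of_int \<bar>red_euler_char \<Delta>\<bar>)"
      using True by (simp add: \<chi>_def)
    then show ?thesis by (simp add: asymp_equiv_refl)
  next
    case False
    then have C0: "C \<noteq> 0" using nC by auto
    define q where "q k = smult (1 / C) (reflect_poly (h k))" for k
    have rdeg: "degree (reflect_poly (h k)) = Suc d" for k
      using hC[of k] C0 hdeg(1)[of k] by (simp add: degree_reflect_poly_eq)
    have qdeg: "degree (q k) = Suc d" for k unfolding q_def using C0 rdeg by simp
    have qc: "coeff (q k) i = coeff (h k) (Suc d - i) / C" if "i \<le> Suc d" for k i
      unfolding q_def using that hdeg(1)[of k] by (simp add: coeff_reflect_poly)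
    have qtop: "coeff (q k) (Suc d) = 1" for k using qc[of "Suc d" k] hC C0 by simp
    have r0: "\<rho>0 k \<noteq> 0" for k
    proof
      assume "\<rho>0 k = 0"
      then have "coeff (h k) 0 = 0" using assms(7)[of k] by (simp add: h_def poly_0_coeff_0)
      then show False using hC C0 by simp
    qed
    have polyq: "poly (q k) x = (1 / C) * (x ^ Suc d * poly (h k) (inverse x))" if "x \<noteq> 0" for k x
      unfolding q_def using that hdeg(1)[of k] by (simp add: poly_reflect_poly_nz)
    have lim2: "(\<lambda>k. inverse (\<rho>0 k) / of_real (lam ^ k)) \<longlonglongrightarrow> - (complex_of_real (g0 * coeff (Hpoly d) 1) / C)"
    proof (rule root_asym[of "Suc d" q])
      show "Suc d \<ge> 1" by simp
      show "\<And>k. degree (q k) = Suc d" "\<And>k. coeff (q k) (Suc d) = 1" using qdeg qtop by auto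
      show "\<And>k. lam ^ k > 0" using lam1 by simp
      have "(\<lambda>k. coeff (h k) 1 / of_real (lam ^ k) / C) \<longlonglongrightarrow> complex_of_real (g0 * coeff (Hpoly d) 1) / C"
        using C0 by (intro tendsto_divide conv tendsto_const)
      moreover have "coeff (q k) (Suc d - 1) / of_real (lam ^ k) = coeff (h k) 1 / of_real (lam ^ k) / C" for k
        using qc[of "Suc d - 1" k] d1 by simp
      ultimately show "(\<lambda>k. coeff (q k) (Suc d - 1) / of_real (lam ^ k)) \<longlonglongrightarrow> complex_of_real (g0 * coeff (Hpoly d) 1) / C"
        by simp
      show "complex_of_real (g0 * coeff (Hpoly d) 1) / C \<noteq> 0" using g0pos F1 cH1 C0 by simp
      show "(\<lambda>k. norm (coeff (q k) i) / (lam ^ k) ^ (Suc d - i)) \<longlonglongrightarrow> 0" if i: "i < Suc d - 1" for i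
      proof -
        have "(\<lambda>k. coeff (h k) (Suc d - i) / C / of_real (lam ^ k)) \<longlonglongrightarrow> complex_of_real (g0 * coeff (Hpoly d) (Suc d - i)) / C"
        proof -
          have "(\<lambda>k. coeff (h k) (Suc d - i) / of_real (lam ^ k) / C) \<longlonglongrightarrow> complex_of_real (g0 * coeff (Hpoly d) (Suc d - i)) / C"
            using C0 by (intro tendsto_divide conv tendsto_const)
          moreover have "coeff (h k) (Suc d - i) / of_real (lam ^ k) / C = coeff (h k) (Suc d - i) / C / of_real (lam ^ k)" for k
            by (simp add: divide_divide_eq_left mult.commute)
          ultimately show ?thesis by (simp add: mult.commute)
        qed
        then have "(\<lambda>k. norm (coeff (h k) (Suc d - i) / C) / (lam ^ k) ^ (Suc d - i)) \<longlonglongrightarrow> 0"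
          using lam1 i by (intro decay) auto
        moreover have "coeff (q k) i = coeff (h k) (Suc d - i) / C" for k using qc[of i k] i by simp
        ultimately show ?thesis by simp
      qed
      show "\<And>k. poly (q k) (inverse (\<rho>0 k)) = 0"
        using polyq r0 assms(7) by (simp add: h_def)
      show "norm z \<le> norm (inverse (\<rho>0 k))" if z: "poly (q k) z = 0" for k z
      proof -
        have z0: "z \<noteq> 0"
        proof
          assume "z = 0"
          then have "poly (q k) 0 = 0" using z by simp
          moreover have "poly (q k) 0 = 1 / C" unfolding q_def using hdeg[of k] by (simp add: poly_reflect_poly_0)
          ultimately show False using C0 by simp
        qed
        then have "poly (h k) (inverse z) = 0" using z polyq[OF z0, of k] C0 by simp
        then have "norm (\<rho>0 k) \<le> norm (inverse z)" using assms(8) by (simp add: h_def)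
        then have "norm (\<rho>0 k) \<le> 1 / norm z" by (simp add: norm_inverse divide_inverse)
        then have "norm z * norm (\<rho>0 k) \<le> 1" using z0 by (simp add: field_simps)
        moreover have "norm (\<rho>0 k) > 0" using r0[of k] by simp
        ultimately have "norm z \<le> 1 / norm (\<rho>0 k)" by (simp add: pos_le_divide_eq)
        then show ?thesis by (simp add: norm_inverse divide_inverse)
      qed
    qed
    then have "(\<lambda>k. norm (inverse (\<rho>0 k) / of_real (lam ^ k))) \<longlonglongrightarrow> norm (- (complex_of_real (g0 * coeff (Hpoly d) 1) / C))"
      by (rule tendsto_norm)
    moreover have "norm (inverse (\<rho>0 k) / of_real (lam ^ k)) = inverse (norm (\<rho>0 k) * lam ^ k)" for k
      using lam1 by (simp add: norm_mult norm_divide norm_inverse norm_power divide_inverse power_inverse)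
    moreover have "norm (- (complex_of_real (g0 * coeff (Hpoly d) 1) / C)) = c' / real_of_int \<bar>\<chi>\<bar>"
      using cH1 g0pos F1 nC by (simp add: norm_divide norm_mult c'_def)
    ultimately have "(\<lambda>k. inverse (norm (\<rho>0 k) * lam ^ k)) \<longlonglongrightarrow> c' / real_of_int \<bar>\<chi>\<bar>" by simp
    then have "(\<lambda>k. inverse (inverse (norm (\<rho>0 k) * lam ^ k))) \<longlonglongrightarrow> inverse (c' / real_of_int \<bar>\<chi>\<bar>)"
      using c'pos False by (intro tendsto_inverse) auto
    then have "(\<lambda>k. norm (\<rho>0 k) * lam ^ k) \<longlonglongrightarrow> real_of_int \<bar>\<chi>\<bar> / c'" by simp
    then have "(\<lambda>k. c' * (norm (\<rho>0 k) * lam ^ k)) \<longlonglongrightarrow> c' * (real_of_int \<bar>\<chi>\<bar> / c')"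
      by (intro tendsto_mult tendsto_const)
    moreover have "c' * (real_of_int \<bar>\<chi>\<bar> / c') = real_of_int \<bar>\<chi>\<bar>" using c'pos by simp
    moreover have "(\<lambda>k. Hnum 1 d * real (fvec \<Delta> (int d)) * norm (\<rho>0 k) * fact (d + 1) ^ k) = (\<lambda>k. c' * (norm (\<rho>0 k) * lam ^ k))"
      unfolding H1 fD lam_def c'_def by (simp add: mult_ac)
    ultimately have gl: "(\<lambda>k. Hnum 1 d * real (fvec \<Delta> (int d)) * norm (\<rho>0 k) * fact (d + 1) ^ k) \<longlonglongrightarrow> real_of_int \<bar>\<chi>\<bar>"
      by simp
    show ?thesis
    proof (rule asymp_equivI')
      have "(\<lambda>k. real_of_int \<bar>red_euler_char \<Delta>\<bar> / (Hnum 1 d * real (fvec \<Delta> (int d)) * norm (\<rho>0 k) * fact (d + 1) ^ k))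
          \<longlonglongrightarrow> real_of_int \<bar>\<chi>\<bar> / real_of_int \<bar>\<chi>\<bar>"
        unfolding \<chi>_def using False gl by (intro tendsto_divide tendsto_const) (auto simp: \<chi>_def)
      then show "(\<lambda>k. real_of_int \<bar>red_euler_char \<Delta>\<bar> / (Hnum 1 d * real (fvec \<Delta> (int d)) * norm (\<rho>0 k) * fact (d + 1) ^ k))
          \<longlonglongrightarrow> 1" using False by (simp add: \<chi>_def)
    qed
  qed
  show ?thesis using P1 P2 by blast
qed


end
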